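(* Let $v_{i_1},\dots,v_{i_m}$ be distinct variables and $e,f,g_1,\dots,g_m,h_1,\dots,h_m\in\mathsf{Exp}/{\sim}$. Then $\mathsf{bd}\big(e[(g_1,\dots,g_m)/(v_{i_1},\dots,v_{i_m})],\,f[(h_1,\dots,h_m)/(v_{i_1},\dots,v_{i_m})]\big)\le\max\{\mathsf{bd}(e,f),\max_{1\le j\le m}\mathsf{bd}(g_j,h_j)\}$.
   Context: Fix variables $V=\{v_1,v_2,\dots\}$ and letters $\Sigma$. Expressions: $e\in\mathsf{Exp}::=0\mid v\ (v\in V)\mid a.e\mid e+f\mid\mu v.e$ ($\mu v$ binds $v$); $e[\vec f/\vec v]$ is simultaneous capture-avoiding substitution. The prechart $(\mathsf{Exp},\partial)$: least relations with $a.e\xrightarrow{a}e$; $v\rhd v$; $e+f$ has all transitions and outputs of $e$ and of $f$; $\mu w.e\rhd v$ if $e\rhd v$, $v\ne w$; $\mu v.e\xrightarrow{a}e'[\mu v.e/v]$ if $e\xrightarrow{a}e'$. Bisimilarity $\sim$ is a congruence for all operations including substitution; $\mathsf{Exp}/{\sim}$ is a prechart $\bar\partial$ via $[e]\xrightarrow{a}[e']$ iff $e\xrightarrow{a}e'$, $[e]\rhd v$ iff $e\rhd v$; it maps $[e]$ to $\beta([e])=\{(a,[e'])\}\cup\{v\mid e\rhd v\}$, a finite set. A 1-bounded pseudometric on $X$ is $d:X\times X\to[0,1]$ with $d(x,x)=0$, symmetry, triangle inequality, ordered pointwise. $d^\uparrow$ on $\Sigma\times X+V$: $d^\uparrow((a,x),(a,y))=\tfrac12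 d(x,y)$, $0$ if equal, $1$ otherwise. $\mathcal H(d)(A,B)=\max\{\sup_{x\in A}\inf_{y\in B}d(x,y),\sup_{y\in B}\inf_{x\in A}d(y,x)\}$, $\sup\emptyset=0$, $\inf\emptyset=1$. $\mathsf{bd}$ is the least fixpoint of $d\mapsto\big((x,y)\mapsto\mathcal H(d^\uparrow)(\beta(x),\beta(y))\big)$ on pseudometrics on $\mathsf{Exp}/{\sim}$. *)

theory Defs
  imports Complex_Main
begin

text \<open>Variables v_i are represented by natural numbers i; letters by an arbitrary type 'a.\<close>

datatype 'a exp = Zero | Var nat | Act 'a "'a exp" | Plus "'a exp" "'a exp" | Mu nat "'a exp"

primrec fv :: "'a exp \<Rightarrow> nat set" where
  "fv Zero = {}"
| "fv (Var v) = {v}"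
| "fv (Act a e) = fv e"
| "fv (Plus e f) = fv e \<union> fv f"
| "fv (Mu v e) = fv e - {v}"

definition fresh :: "nat set \<Rightarrow> nat" where
  "fresh S = Suc (Max (insert 0 S))"

text \<open>Simultaneous capture-avoiding substitution: the bound variable is renamed
  to a fresh one whenever it would capture a free variable of a substituted expression.\<close>
primrec subst :: "(nat \<Rightarrow> 'a exp) \<Rightarrow> 'a exp \<Rightarrow> 'a exp" where
  "subst \<sigma> Zero = Zero"
| "subst \<sigma> (Var v) = \<sigma> v"
| "subst \<sigma> (Act a e) = Act a (subst \<sigma> e)"
| "subst \<sigma> (Plus e f) = Plus (subst \<sigma> e) (subst \<sigma> f)"
| "subst \<sigma> (Mu v e) =
     (let S = (\<Union>u\<in>fv e - {v}. fv (\<sigma> u)) \<union> fv e;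
          w = (if v \<in> (\<Union>u\<in>fv e - {v}. fv (\<sigma> u)) then fresh S else v)
      in Mu w (subst (\<sigma>(v := Var w)) e))"

definition simsub :: "nat list \<Rightarrow> 'a exp list \<Rightarrow> nat \<Rightarrow> 'a exp" where
  "simsub vs gs v = (case map_of (zip vs gs) v of Some g \<Rightarrow> g | None \<Rightarrow> Var v)"

inductive out :: "'a exp \<Rightarrow> nat \<Rightarrow> bool" where
  "out (Var v) v"
| "out e v \<Longrightarrow> out (Plus e f) v"
| "out f v \<Longrightarrow> out (Plus e f) v"
| "out e v \<Longrightarrow> v \<noteq> w \<Longrightarrow> out (Mu w e) v"

inductive step :: "'a exp \<Rightarrow> 'a \<Rightarrow> 'a exp \<Rightarrow> bool" where
  "step (Act a e) a e"
| "step e a e' \<Longrightarrow> step (Plus e f) a e'"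
| "step f a f' \<Longrightarrow> step (Plus e f) a f'"
| "step e a e' \<Longrightarrow> step (Mu v e) a (subst (Var(v := Mu v e)) e')"

definition bisimulation :: "('a exp \<times> 'a exp) set \<Rightarrow> bool" where
  "bisimulation R \<longleftrightarrow> (\<forall>(x, y) \<in> R.
      (\<forall>v. out x v \<longleftrightarrow> out y v)
    \<and> (\<forall>a x'. step x a x' \<longrightarrow> (\<exists>y'. step y a y' \<and> (x', y') \<in> R))
    \<and> (\<forall>a y'. step y a y' \<longrightarrow> (\<exists>x'. step x a x' \<and> (x', y') \<in> R)))"

definition bisim :: "'a exp \<Rightarrow> 'a exp \<Rightarrow> bool" where
  "bisim x y \<longleftrightarrow> (\<exists>R. bisimulation R \<and> (x, y) \<in> R)"

definition cls :: "'a exp \<Rightarrow> 'a exp set" where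
  "cls e = {f. bisim e f}"

definition Q :: "'a exp set set" where
  "Q = range cls"

definition beta :: "'a exp set \<Rightarrow> ('a \<times> 'a exp set + nat) set" where
  "beta X = {Inl (a, cls e') | a e e'. e \<in> X \<and> step e a e'} \<union> {Inr v | v e. e \<in> X \<and> out e v}"

definition lift :: "('b \<Rightarrow> 'b \<Rightarrow> real) \<Rightarrow> ('a \<times> 'b + nat) \<Rightarrow> ('a \<times> 'b + nat) \<Rightarrow> real" where
  "lift d p q = (case (p, q) of
      (Inl (a, x), Inl (b, y)) \<Rightarrow> (if a = b then d x y / 2 else 1)
    | _ \<Rightarrow> (if p = q then 0 else 1))"

definition sup0 :: "real set \<Rightarrow> real" where
  "sup0 S = (if S = {} then 0 else Sup S)"

definition inf1 :: "real set \<Rightarrow> real" where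
  "inf1 S = (if S = {} then 1 else Inf S)"

definition hausdorff :: "('c \<Rightarrow> 'c \<Rightarrow> real) \<Rightarrow> 'c set \<Rightarrow> 'c set \<Rightarrow> real" where
  "hausdorff d A B = max (sup0 ((\<lambda>x. inf1 ((\<lambda>y. d x y) ` B)) ` A))
                         (sup0 ((\<lambda>y. inf1 ((\<lambda>x. d y x) ` A)) ` B))"

definition Phi :: "('a exp set \<Rightarrow> 'a exp set \<Rightarrow> real) \<Rightarrow> 'a exp set \<Rightarrow> 'a exp set \<Rightarrow> real" where
  "Phi d x y = hausdorff (lift d) (beta x) (beta y)"

definition pseudometric_on :: "'c set \<Rightarrow> ('c \<Rightarrow> 'c \<Rightarrow> real) \<Rightarrow> bool" where
  "pseudometric_on X d \<longleftrightarrow> (\<forall>x\<in>X. \<forall>y\<in>X. 0 \<le> d x y \<and> d x y \<le> 1 \<and> d x x = 0 \<and> d x y = d y x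
      \<and> (\<forall>z\<in>X. d x z \<le> d x y + d y z))"

text \<open>bd: the least fixpoint of Phi among 1-bounded pseudometrics on Exp/~ (ordered
  pointwise); values outside Exp/~ are normalised to 0 so that it is uniquely determined.\<close>
definition bd :: "'a exp set \<Rightarrow> 'a exp set \<Rightarrow> real" where
  "bd = (THE d. pseudometric_on Q d
           \<and> (\<forall>x\<in>Q. \<forall>y\<in>Q. Phi d x y = d x y)
           \<and> (\<forall>x y. x \<notin> Q \<or> y \<notin> Q \<longrightarrow> d x y = 0)
           \<and> (\<forall>d'. pseudometric_on Q d' \<and> (\<forall>x\<in>Q. \<forall>y\<in>Q. Phi d' x y = d' x y)
                   \<longrightarrow> (\<forall>x\<in>Q. \<forall>y\<in>Q. d x y \<le> d' x y)))"

end

theory Submission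
  imports Defs
begin


lemma finite_fv[simp]: "finite (fv e)"
  by (induct e) auto

lemma fresh_notin: "finite S \<Longrightarrow> fresh S \<notin> S"
proof
  assume f: "finite S" and m: "fresh S \<in> S"
  have "fresh S \<le> Max (insert 0 S)" using f m by (intro Max_ge) auto
  thus False unfolding fresh_def by simp
qed

lemma subst_Mu:
  "\<exists>w. subst \<sigma> (Mu v e) = Mu w (subst (\<sigma>(v := Var w)) e) \<and> (\<forall>u\<in>fv e - {v}. w \<notin> fv (\<sigma> u))"
proof -
  define U where "U = (\<Union>u\<in>fv e - {v}. fv (\<sigma> u))"
  define S where "S = U \<union> fv e"
  define w where "w = (if v \<in> U then fresh S else v)"
  have fS: "finite S" unfolding S_def U_def by auto
  have "subst \<sigma> (Mu v e) = Mu w (subst (\<sigma>(v := Var w)) e)"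
    by (simp add: Let_def U_def S_def w_def)
  moreover have "\<forall>u\<in>fv e - {v}. w \<notin> fv (\<sigma> u)"
  proof (cases "v \<in> U")
    case True
    then show ?thesis using fresh_notin[OF fS] unfolding w_def S_def U_def by auto
  next
    case False
    then show ?thesis unfolding w_def U_def by auto
  qed
  ultimately show ?thesis by blast
qed

lemma subst_cong: "(\<And>u. u \<in> fv x \<Longrightarrow> \<sigma> u = \<tau> u) \<Longrightarrow> subst \<sigma> x = subst \<tau> x"
proof (induct x arbitrary: \<sigma> \<tau>)
  case (Mu v e)
  have U: "(\<Union>u\<in>fv e - {v}. fv (\<sigma> u)) = (\<Union>u\<in>fv e - {v}. fv (\<tau> u))"
    using Mu.prems by (intro SUP_cong) auto
  define w where "w = (if v \<in> (\<Union>u\<in>fv e - {v}. fv (\<tau> u)) then fresh ((\<Union>u\<in>fv e - {v}. fv (\<tau> u)) \<union> fv e) else v)"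
  have "subst (\<sigma>(v := Var w)) e = subst (\<tau>(v := Var w)) e"
    by (rule Mu.hyps) (use Mu.prems in auto)
  then show ?case
    by (simp only: subst.simps Let_def U w_def)
next
  case (Plus e f) then show ?case by (metis UnCI fv.simps(4) subst.simps(4))
next
  case (Act a e) then show ?case by (metis fv.simps(3) subst.simps(3))
qed auto

lemma subst_id: "(\<And>u. u \<in> fv x \<Longrightarrow> \<sigma> u = Var u) \<Longrightarrow> subst \<sigma> x = x"
proof (induct x arbitrary: \<sigma>)
  case (Mu v e)
  have U: "v \<notin> (\<Union>u\<in>fv e - {v}. fv (\<sigma> u))"
    using Mu.prems by auto
  have "subst (\<sigma>(v := Var v)) e = e"
    by (rule Mu.hyps) (use Mu.prems in auto)
  then show ?case
    using U by (simp only: subst.simps Let_def if_False)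
next
  case (Plus e f) then show ?case by (metis UnCI fv.simps(4) subst.simps(4))
next
  case (Act a e) then show ?case by (metis fv.simps(3) subst.simps(3))
qed auto

lemma subst_Var[simp]: "subst Var x = x"
  by (rule subst_id) auto

lemma fv_subst: "fv (subst \<sigma> x) \<subseteq> (\<Union>u\<in>fv x. fv (\<sigma> u))"
proof (induct x arbitrary: \<sigma>)
  case (Mu v e)
  obtain w where w: "subst \<sigma> (Mu v e) = Mu w (subst (\<sigma>(v := Var w)) e)"
    "\<forall>u\<in>fv e - {v}. w \<notin> fv (\<sigma> u)" using subst_Mu by blast
  have "fv (subst (\<sigma>(v := Var w)) e) \<subseteq> (\<Union>u\<in>fv e. fv ((\<sigma>(v := Var w)) u))"
    by (rule Mu.hyps)
  then show ?case using w by (auto split: if_splits)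
next
  case (Plus x1 x2)
  have h1: "fv (subst \<sigma> x1) \<subseteq> (\<Union>u\<in>fv x1. fv (\<sigma> u))" by (rule Plus.hyps)
  have h2: "fv (subst \<sigma> x2) \<subseteq> (\<Union>u\<in>fv x2. fv (\<sigma> u))" by (rule Plus.hyps)
  show ?case using h1 h2 by auto
next
  case (Act a x)
  then show ?case using Act.hyps[of \<sigma>] by auto
qed auto

lemma out_fv: "out x v \<Longrightarrow> v \<in> fv x"
  by (induct rule: out.induct) auto

lemma step_fv: "step x a x' \<Longrightarrow> fv x' \<subseteq> fv x"
proof (induct rule: step.induct)
  case (4 e a e' v)
  have "fv (subst (Var(v := Mu v e)) e') \<subseteq> (\<Union>u\<in>fv e'. fv ((Var(v := Mu v e)) u))"
    by (rule fv_subst)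
  also have "\<dots> \<subseteq> fv (Mu v e)" using 4 by (auto split: if_splits)
  finally show ?case .
qed auto

inductive_cases outE: "out Zero v" "out (Var u) v" "out (Act a e) v" "out (Plus e f) v" "out (Mu w e) v"
inductive_cases stepE: "step Zero a r" "step (Var u) a r" "step (Act b e) a r" "step (Plus e f) a r" "step (Mu w e) a r"

lemma out_subst: "out (subst \<sigma> s) v \<longleftrightarrow> (\<exists>u. out s u \<and> out (\<sigma> u) v)"
proof (induct s arbitrary: \<sigma>)
  case Zero
  then show ?case by (auto elim: outE)
next
  case (Var x)
  then show ?case by (auto elim: outE intro: out.intros)
next
  case (Act x1a s)
  then show ?case by (auto elim: outE)
next
  case (Plus s1 s2)
  have "out (subst \<sigma> (Plus s1 s2)) v \<longleftrightarrow> out (subst \<sigma> s1) v \<or> out (subst \<sigma> s2) v"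
    by (auto elim: outE intro: out.intros)
  also have "\<dots> \<longleftrightarrow> (\<exists>u. out (Plus s1 s2) u \<and> out (\<sigma> u) v)"
    using Plus.hyps[of \<sigma>] by (blast elim: outE intro: out.intros)
  finally show ?case .
next
  case (Mu y e)
  obtain w where w: "subst \<sigma> (Mu y e) = Mu w (subst (\<sigma>(y := Var w)) e)"
    "\<forall>u\<in>fv e - {y}. w \<notin> fv (\<sigma> u)" using subst_Mu by blast
  have "out (subst \<sigma> (Mu y e)) v \<longleftrightarrow> out (subst (\<sigma>(y := Var w)) e) v \<and> v \<noteq> w"
    unfolding w(1) by (blast elim: outE intro: out.intros)
  also have "\<dots> \<longleftrightarrow> (\<exists>u. out e u \<and> out ((\<sigma>(y := Var w)) u) v) \<and> v \<noteq> w"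
    using Mu.hyps by simp
  also have "\<dots> \<longleftrightarrow> (\<exists>u. out (Mu y e) u \<and> out (\<sigma> u) v)"
  proof
    assume "(\<exists>u. out e u \<and> out ((\<sigma>(y := Var w)) u) v) \<and> v \<noteq> w"
    then obtain u where u: "out e u" "out ((\<sigma>(y := Var w)) u) v" "v \<noteq> w" by blast
    have "u \<noteq> y" proof assume "u = y" with u(2) have "out ((\<sigma>(y := Var w)) y) v" by simp
      then show False using u(3) by (auto elim: outE) qed
    then show "\<exists>u. out (Mu y e) u \<and> out (\<sigma> u) v" using u by (auto intro: out.intros)
  next
    assume "\<exists>u. out (Mu y e) u \<and> out (\<sigma> u) v"
    then obtain u where u: "out e u" "u \<noteq> y" "out (\<sigma> u) v" by (blast elim: outE)
    have "v \<noteq> w" using w(2) u out_fv[OF u(3)] out_fv[OF u(1)] by auto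
    then show "(\<exists>u. out e u \<and> out ((\<sigma>(y := Var w)) u) v) \<and> v \<noteq> w" using u by auto
  qed
  finally show ?case .
qed


datatype 'a ln = LZero | LFree nat | LBound nat | LAct 'a "'a ln" | LPlus "'a ln" "'a ln" | LMu "'a ln"

primrec idx :: "nat list \<Rightarrow> nat \<Rightarrow> nat" where
  "idx [] u = 0"
| "idx (x # xs) u = (if x = u then 0 else Suc (idx xs u))"

primrec db :: "nat list \<Rightarrow> 'a exp \<Rightarrow> 'a ln" where
  "db S Zero = LZero"
| "db S (Var u) = (if u \<in> set S then LBound (idx S u) else LFree u)"
| "db S (Act a e) = LAct a (db S e)"
| "db S (Plus e f) = LPlus (db S e) (db S f)"
| "db S (Mu v e) = LMu (db (v # S) e)"

primrec lsubst :: "(nat \<Rightarrow> 'a ln) \<Rightarrow> 'a ln \<Rightarrow> 'a ln" where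
  "lsubst g LZero = LZero"
| "lsubst g (LFree u) = g u"
| "lsubst g (LBound i) = LBound i"
| "lsubst g (LAct a t) = LAct a (lsubst g t)"
| "lsubst g (LPlus t1 t2) = LPlus (lsubst g t1) (lsubst g t2)"
| "lsubst g (LMu t) = LMu (lsubst g t)"

primrec lfv :: "'a ln \<Rightarrow> nat set" where
  "lfv LZero = {}"
| "lfv (LFree u) = {u}"
| "lfv (LBound i) = {}"
| "lfv (LAct a t) = lfv t"
| "lfv (LPlus t1 t2) = lfv t1 \<union> lfv t2"
| "lfv (LMu t) = lfv t"

primrec lopen :: "nat \<Rightarrow> nat \<Rightarrow> 'a ln \<Rightarrow> 'a ln" where
  "lopen z k LZero = LZero"
| "lopen z k (LFree u) = LFree u"
| "lopen z k (LBound i) = (if i = k then LFree z else LBound i)"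
| "lopen z k (LAct a t) = LAct a (lopen z k t)"
| "lopen z k (LPlus t1 t2) = LPlus (lopen z k t1) (lopen z k t2)"
| "lopen z k (LMu t) = LMu (lopen z (Suc k) t)"

primrec lout :: "'a ln \<Rightarrow> nat \<Rightarrow> bool" where
  "lout LZero v = False"
| "lout (LFree u) v = (u = v)"
| "lout (LBound i) v = False"
| "lout (LAct a t) v = False"
| "lout (LPlus t1 t2) v = (lout t1 v \<or> lout t2 v)"
| "lout (LMu t) v = lout t v"

lemma idx_less: "u \<in> set S \<Longrightarrow> idx S u < length S"
  by (induct S) auto

lemma idx_nth: "u \<in> set S \<Longrightarrow> S ! idx S u = u"
  by (induct S) auto

lemma idx_append1: "u \<in> set S \<Longrightarrow> idx (S @ T) u = idx S u"
  by (induct S) auto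

lemma idx_append2: "u \<notin> set S \<Longrightarrow> idx (S @ T) u = length S + idx T u"
  by (induct S) auto

lemma lfv_db: "lfv (db S x) = fv x - set S"
  by (induct x arbitrary: S) auto

lemma lsubst_cong: "(\<And>u. u \<in> lfv t \<Longrightarrow> f u = g u) \<Longrightarrow> lsubst f t = lsubst g t"
proof (induct t)
  case (LPlus t1 t2)
  have "lsubst f t1 = lsubst g t1" by (rule LPlus.hyps(1)) (use LPlus.prems in auto)
  moreover have "lsubst f t2 = lsubst g t2" by (rule LPlus.hyps(2)) (use LPlus.prems in auto)
  ultimately show ?case by simp
next
  case (LAct a t)
  have "lsubst f t = lsubst g t" by (rule LAct.hyps) (use LAct.prems in auto)
  then show ?case by simp
next
  case (LMu t)
  have "lsubst f t = lsubst g t" by (rule LMu.hyps) (use LMu.prems in auto)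
  then show ?case by simp
qed auto

lemma lsubst_comp: "lsubst g (lsubst f t) = lsubst (\<lambda>u. lsubst g (f u)) t"
  by (induct t) auto

lemma lsubst_LFree: "(\<And>u. u \<in> lfv t \<Longrightarrow> f u = LFree u) \<Longrightarrow> lsubst f t = t"
proof -
  assume a: "\<And>u. u \<in> lfv t \<Longrightarrow> f u = LFree u"
  have "lsubst f t = lsubst LFree t" by (rule lsubst_cong) (use a in auto)
  also have "lsubst LFree t = t" by (induct t) auto
  finally show ?thesis .
qed

lemma db_append: "(\<And>u. u \<in> fv y \<Longrightarrow> u \<in> set S \<Longrightarrow> u \<in> set T) \<Longrightarrow> db (T @ S) y = db T y"
proof (induct y arbitrary: T)
  case (Var u)
  then show ?case by (auto simp: idx_append1)
next
  case (Act a e)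
  have "db (T @ S) e = db T e" by (rule Act.hyps) (use Act.prems in auto)
  then show ?case by simp
next
  case (Plus e f)
  have "db (T @ S) e = db T e" by (rule Plus.hyps) (use Plus.prems in auto)
  moreover have "db (T @ S) f = db T f" by (rule Plus.hyps) (use Plus.prems in auto)
  ultimately show ?case by simp
next
  case (Mu v e)
  have "db ((v # T) @ S) e = db (v # T) e" by (rule Mu.hyps) (use Mu.prems in auto)
  then show ?case by simp
qed simp

lemma db_nil: "fv y \<inter> set S = {} \<Longrightarrow> db S y = db [] y"
  using db_append[of y S "[]"] by auto

lemma db_open: "db S x = lopen z (length S) (db (S @ [z]) x)"
proof (induct x arbitrary: S)
  case (Var u)
  show ?case
  proof (cases "u \<in> set S")
    case True
    then show ?thesis using idx_less[OF True] by (simp add: idx_append1)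
  next
    case False
    then show ?thesis by (cases "u = z") (simp_all add: idx_append2)
  qed
next
  case (Mu v e)
  have "db (v # S) e = lopen z (length (v # S)) (db ((v # S) @ [z]) e)" by (rule Mu.hyps)
  then show ?case by simp
next
  case (Act a e)
  have "db S e = lopen z (length S) (db (S @ [z]) e)" by (rule Act.hyps)
  then show ?case by simp
next
  case (Plus e f)
  have "db S e = lopen z (length S) (db (S @ [z]) e)" by (rule Plus.hyps)
  moreover have "db S f = lopen z (length S) (db (S @ [z]) f)" by (rule Plus.hyps)
  ultimately show ?case by simp
qed simp

lemma db_open1: "db [v] x = db [v] y \<Longrightarrow> db [] x = db [] y"
  using db_open[of "[]" x v] db_open[of "[]" y v] by simp

lemma lout_db: "lout (db S x) v \<longleftrightarrow> out x v \<and> v \<notin> set S"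
proof (induct x arbitrary: S)
  case Zero
  then show ?case by (auto elim: outE)
next
  case (Var u)
  have "out (Var u :: 'a exp) v \<longleftrightarrow> u = v" by (blast elim: outE intro: out.intros)
  then show ?case by auto
next
  case (Act a e)
  then show ?case by (auto elim: outE)
next
  case (Plus e f)
  have "lout (db S (Plus e f)) v \<longleftrightarrow> lout (db S e) v \<or> lout (db S f) v" by simp
  also have "\<dots> \<longleftrightarrow> (out e v \<or> out f v) \<and> v \<notin> set S" using Plus.hyps[of S] by blast
  also have "\<dots> \<longleftrightarrow> out (Plus e f) v \<and> v \<notin> set S" by (blast elim: outE intro: out.intros)
  finally show ?case .
next
  case (Mu w e)
  have "lout (db S (Mu w e)) v \<longleftrightarrow> lout (db (w # S) e) v" by simp
  also have "\<dots> \<longleftrightarrow> out e v \<and> v \<notin> set (w # S)" by (rule Mu.hyps)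
  also have "\<dots> \<longleftrightarrow> out (Mu w e) v \<and> v \<notin> set S" by (auto elim: outE intro: out.intros)
  finally show ?case .
qed

lemma db_subst:
  "length S = length S' \<Longrightarrow>
   (\<And>u. u \<in> fv x \<Longrightarrow> (u \<in> set S \<longrightarrow> \<sigma> u = Var (S' ! idx S u) \<and> idx S' (S' ! idx S u) = idx S u)
       \<and> (u \<notin> set S \<longrightarrow> fv (\<sigma> u) \<inter> set S' = {})) \<Longrightarrow>
   db S' (subst \<sigma> x) = lsubst (\<lambda>u. db [] (\<sigma> u)) (db S x)"
proof (induct x arbitrary: S S' \<sigma>)
  case (Var u)
  show ?case
  proof (cases "u \<in> set S")
    case True
    then have "S' ! idx S u \<in> set S'" using Var.prems(1) idx_less[OF True] by simp
    then show ?thesis using Var.prems True by simp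
  next
    case False
    then show ?thesis using Var.prems db_nil[of "\<sigma> u" S'] by simp
  qed
next
  case (Act a e)
  have "db S' (subst \<sigma> e) = lsubst (\<lambda>u. db [] (\<sigma> u)) (db S e)"
    by (rule Act.hyps) (use Act.prems in auto)
  then show ?case by simp
next
  case (Plus e f)
  have "db S' (subst \<sigma> e) = lsubst (\<lambda>u. db [] (\<sigma> u)) (db S e)"
    by (rule Plus.hyps) (use Plus.prems in auto)
  moreover have "db S' (subst \<sigma> f) = lsubst (\<lambda>u. db [] (\<sigma> u)) (db S f)"
    by (rule Plus.hyps) (use Plus.prems in auto)
  ultimately show ?case by simp
next
  case (Mu v e)
  obtain w where w: "subst \<sigma> (Mu v e) = Mu w (subst (\<sigma>(v := Var w)) e)"
    "\<forall>u\<in>fv e - {v}. w \<notin> fv (\<sigma> u)" using subst_Mu by blast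
  have IH: "db (w # S') (subst (\<sigma>(v := Var w)) e) = lsubst (\<lambda>u. db [] ((\<sigma>(v := Var w)) u)) (db (v # S) e)"
  proof (rule Mu.hyps)
    show "length (v # S) = length (w # S')" using Mu.prems(1) by simp
  next
    fix u assume u: "u \<in> fv e"
    show "(u \<in> set (v # S) \<longrightarrow> (\<sigma>(v := Var w)) u = Var ((w # S') ! idx (v # S) u) \<and>
            idx (w # S') ((w # S') ! idx (v # S) u) = idx (v # S) u) \<and>
          (u \<notin> set (v # S) \<longrightarrow> fv ((\<sigma>(v := Var w)) u) \<inter> set (w # S') = {})"
    proof (cases "u = v")
      case True
      then show ?thesis by simp
    next
      case False
      then have uf: "u \<in> fv (Mu v e)" using u by simp
      have wn: "w \<notin> fv (\<sigma> u)" using w(2) u False by blast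
      show ?thesis
      proof (cases "u \<in> set S")
        case True
        have "\<sigma> u = Var (S' ! idx S u)" "idx S' (S' ! idx S u) = idx S u"
          using Mu.prems(2)[OF uf] True by auto
        then show ?thesis using False True wn by auto
      next
        case nS: False
        have "fv (\<sigma> u) \<inter> set S' = {}" using Mu.prems(2)[OF uf] nS by auto
        then show ?thesis using False nS wn by auto
      qed
    qed
  qed
  have "lsubst (\<lambda>u. db [] ((\<sigma>(v := Var w)) u)) (db (v # S) e) = lsubst (\<lambda>u. db [] (\<sigma> u)) (db (v # S) e)"
    by (rule lsubst_cong) (auto simp: lfv_db)
  then show ?case using w(1) IH by simp
qed simp

lemma db_subst0: "db [] (subst \<sigma> x) = lsubst (\<lambda>u. db [] (\<sigma> u)) (db [] x)"
  by (rule db_subst) auto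

lemma db_subst_comp: "db [] (subst \<sigma>2 (subst \<sigma>1 x)) = db [] (subst (\<lambda>u. subst \<sigma>2 (\<sigma>1 u)) x)"
  by (simp add: db_subst0 lsubst_comp)

lemma db_subst_alpha: "db [] x = db [] y \<Longrightarrow> db [] (subst \<sigma> x) = db [] (subst \<sigma> y)"
  by (simp add: db_subst0)

lemma db_subst_cong: "(\<And>u. u \<in> fv x \<Longrightarrow> db [] (\<sigma> u) = db [] (\<tau> u)) \<Longrightarrow> db [] (subst \<sigma> x) = db [] (subst \<tau> x)"
  unfolding db_subst0 by (rule lsubst_cong) (auto simp: lfv_db)


lemma step_subst_out: "out s u \<Longrightarrow> step (\<sigma> u) a r \<Longrightarrow> step (subst \<sigma> s) a r"
proof (induct arbitrary: \<sigma> rule: out.induct)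
  case (1 v)
  then show ?case by simp
next
  case (2 e v f)
  have "step (subst \<sigma> e) a r" by (rule 2(2)) (rule 2(3))
  then show ?case by (simp add: step.intros)
next
  case (3 f v e)
  have "step (subst \<sigma> f) a r" by (rule 3(2)) (rule 3(3))
  then show ?case by (simp add: step.intros)
next
  case (4 e v w)
  obtain w' where w: "subst \<sigma> (Mu w e) = Mu w' (subst (\<sigma>(w := Var w')) e)"
    "\<forall>u\<in>fv e - {w}. w' \<notin> fv (\<sigma> u)" using subst_Mu by blast
  have "step (subst (\<sigma>(w := Var w')) e) a r" by (rule 4(2)) (use 4(3,4) in simp)
  then have "step (Mu w' (subst (\<sigma>(w := Var w')) e)) a (subst (Var(w' := Mu w' (subst (\<sigma>(w := Var w')) e))) r)"
    by (rule step.intros)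
  moreover have "subst (Var(w' := Mu w' (subst (\<sigma>(w := Var w')) e))) r = r"
  proof (rule subst_id)
    fix u assume "u \<in> fv r"
    then have "u \<in> fv (\<sigma> v)" using step_fv[OF 4(4)] by auto
    moreover have "v \<in> fv e - {w}" using out_fv[OF 4(1)] 4(3) by auto
    ultimately have "u \<noteq> w'" using w(2) by auto
    then show "(Var(w' := Mu w' (subst (\<sigma>(w := Var w')) e))) u = Var u" by simp
  qed
  ultimately show ?case using w(1) by simp
qed

lemma mu_calc:
  assumes w: "subst \<sigma> (Mu v e) = Mu w (subst (\<sigma>(v := Var w)) e)"
    "\<forall>u\<in>fv e - {v}. w \<notin> fv (\<sigma> u)"
    and fe: "fv e' \<subseteq> fv e"
    and r0: "db [] r0 = db [] (subst (\<sigma>(v := Var w)) e')"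
  shows "db [] (subst (Var(w := Mu w (subst (\<sigma>(v := Var w)) e))) r0)
       = db [] (subst \<sigma> (subst (Var(v := Mu v e)) e'))"
proof -
  let ?M = "Mu w (subst (\<sigma>(v := Var w)) e)"
  have "db [] (subst (Var(w := ?M)) r0) = db [] (subst (Var(w := ?M)) (subst (\<sigma>(v := Var w)) e'))"
    using r0 by (rule db_subst_alpha)
  also have "\<dots> = db [] (subst (\<lambda>u. subst (Var(w := ?M)) ((\<sigma>(v := Var w)) u)) e')"
    by (rule db_subst_comp)
  also have "subst (\<lambda>u. subst (Var(w := ?M)) ((\<sigma>(v := Var w)) u)) e'
      = subst (\<lambda>u. subst \<sigma> ((Var(v := Mu v e)) u)) e'"
  proof (rule subst_cong)
    fix u assume u: "u \<in> fv e'"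
    show "subst (Var(w := ?M)) ((\<sigma>(v := Var w)) u) = subst \<sigma> ((Var(v := Mu v e)) u)"
    proof (cases "u = v")
      case True
      then show ?thesis using w(1) by simp
    next
      case False
      have "w \<notin> fv (\<sigma> u)" using w(2) u fe False by auto
      then have "subst (Var(w := ?M)) (\<sigma> u) = \<sigma> u" by (intro subst_id) auto
      then show ?thesis using False by simp
    qed
  qed
  also have "db [] (subst (\<lambda>u. subst \<sigma> ((Var(v := Mu v e)) u)) e') = db [] (subst \<sigma> (subst (Var(v := Mu v e)) e'))"
    by (rule db_subst_comp[symmetric])
  finally show ?thesis .
qed

lemma step_subst_step: "step s a s' \<Longrightarrow> \<exists>r. step (subst \<sigma> s) a r \<and> db [] r = db [] (subst \<sigma> s')"
proof (induct arbitrary: \<sigma> rule: step.induct)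
  case (1 a e)
  then show ?case by (auto intro: step.intros)
next
  case (2 e a e' f)
  obtain r where "step (subst \<sigma> e) a r" "db [] r = db [] (subst \<sigma> e')" using 2(2) by blast
  then show ?case by (auto intro: step.intros)
next
  case (3 f a f' e)
  obtain r where "step (subst \<sigma> f) a r" "db [] r = db [] (subst \<sigma> f')" using 3(2) by blast
  then show ?case by (auto intro: step.intros)
next
  case (4 e a e' v)
  obtain w where w: "subst \<sigma> (Mu v e) = Mu w (subst (\<sigma>(v := Var w)) e)"
    "\<forall>u\<in>fv e - {v}. w \<notin> fv (\<sigma> u)" using subst_Mu by blast
  obtain r0 where r0: "step (subst (\<sigma>(v := Var w)) e) a r0" "db [] r0 = db [] (subst (\<sigma>(v := Var w)) e')"
    using 4(2) by blast
  have "step (subst \<sigma> (Mu v e)) a (subst (Var(w := Mu w (subst (\<sigma>(v := Var w)) e))) r0)"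
    unfolding w(1) by (rule step.intros) (rule r0(1))
  moreover have "db [] (subst (Var(w := Mu w (subst (\<sigma>(v := Var w)) e))) r0)
       = db [] (subst \<sigma> (subst (Var(v := Mu v e)) e'))"
    by (rule mu_calc[OF w step_fv[OF 4(1)] r0(2)])
  ultimately show ?case by blast
qed

lemma subst_step:
  "step (subst \<sigma> s) a r \<Longrightarrow> (\<exists>u. out s u \<and> step (\<sigma> u) a r) \<or> (\<exists>s'. step s a s' \<and> db [] r = db [] (subst \<sigma> s'))"
proof (induct s arbitrary: \<sigma> r)
  case Zero
  then show ?case by (auto elim: stepE)
next
  case (Var u)
  then show ?case by (auto intro: out.intros)
next
  case (Act b e)
  from Act.prems have "a = b" "r = subst \<sigma> e" by (auto elim: stepE)
  then have "step (Act b e) a e \<and> db [] r = db [] (subst \<sigma> e)" by (auto intro: step.intros)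
  then show ?case by blast
next
  case (Plus e f)
  from Plus.prems have "step (subst \<sigma> e) a r \<or> step (subst \<sigma> f) a r" by (auto elim: stepE)
  then show ?case
  proof
    assume "step (subst \<sigma> e) a r"
    from Plus.hyps(1)[OF this] show ?thesis by (blast intro: out.intros step.intros)
  next
    assume "step (subst \<sigma> f) a r"
    from Plus.hyps(2)[OF this] show ?thesis by (blast intro: out.intros step.intros)
  qed
next
  case (Mu v e)
  obtain w where w: "subst \<sigma> (Mu v e) = Mu w (subst (\<sigma>(v := Var w)) e)"
    "\<forall>u\<in>fv e - {v}. w \<notin> fv (\<sigma> u)" using subst_Mu by blast
  let ?M = "Mu w (subst (\<sigma>(v := Var w)) e)"
  from Mu.prems w(1) obtain r0 where r0: "step (subst (\<sigma>(v := Var w)) e) a r0" "r = subst (Var(w := ?M)) r0"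
    by (auto elim: stepE)
  from Mu.hyps[OF r0(1)] show ?case
  proof
    assume "\<exists>u. out e u \<and> step ((\<sigma>(v := Var w)) u) a r0"
    then obtain u where u: "out e u" "step ((\<sigma>(v := Var w)) u) a r0" by blast
    have uv: "u \<noteq> v"
    proof
      assume "u = v"
      with u(2) have "step (Var w :: 'a exp) a r0" by simp
      then show False by (auto elim: stepE)
    qed
    then have st: "step (\<sigma> u) a r0" using u(2) by simp
    have "subst (Var(w := ?M)) r0 = r0"
    proof (rule subst_id)
      fix x assume "x \<in> fv r0"
      then have "x \<in> fv (\<sigma> u)" using step_fv[OF st] by auto
      moreover have "u \<in> fv e - {v}" using out_fv[OF u(1)] uv by auto
      ultimately have "x \<noteq> w" using w(2) by auto
      then show "(Var(w := ?M)) x = Var x" by simp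
    qed
    then have "r = r0" using r0(2) by simp
    moreover have "out (Mu v e) u" using u(1) uv by (rule out.intros)
    ultimately show ?thesis using st by blast
  next
    assume "\<exists>s'. step e a s' \<and> db [] r0 = db [] (subst (\<sigma>(v := Var w)) s')"
    then obtain e' where e': "step e a e'" "db [] r0 = db [] (subst (\<sigma>(v := Var w)) e')" by blast
    have "step (Mu v e) a (subst (Var(v := Mu v e)) e')" by (rule step.intros) (rule e'(1))
    moreover have "db [] r = db [] (subst \<sigma> (subst (Var(v := Mu v e)) e'))"
      unfolding r0(2) by (rule mu_calc[OF w step_fv[OF e'(1)] e'(2)])
    ultimately show ?thesis by blast
  qed
qed

lemma db_nil_cases:
  "db [] y = LMu t \<Longrightarrow> \<exists>w f. y = Mu w f \<and> t = db [w] f"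
  "db [] y = LAct a t \<Longrightarrow> \<exists>f. y = Act a f \<and> t = db [] f"
  "db [] y = LPlus t1 t2 \<Longrightarrow> \<exists>f1 f2. y = Plus f1 f2 \<and> t1 = db [] f1 \<and> t2 = db [] f2"
  by (cases y; simp)+

lemma alpha_step: "step x a x' \<Longrightarrow> db [] x = db [] y \<Longrightarrow> \<exists>y'. step y a y' \<and> db [] x' = db [] y'"
proof (induct arbitrary: y rule: step.induct)
  case (1 a e)
  then obtain f where "y = Act a f" "db [] e = db [] f" using db_nil_cases(2)[of y a "db [] e"] by auto
  then show ?case by (auto intro: step.intros)
next
  case (2 e a e' f)
  then obtain f1 f2 where y: "y = Plus f1 f2" "db [] e = db [] f1" using db_nil_cases(3)[of y "db [] e" "db [] f"] by auto
  obtain y' where "step f1 a y'" "db [] e' = db [] y'" using 2(2)[OF y(2)] by blast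
  then show ?case using y by (auto intro: step.intros)
next
  case (3 f a f' e)
  then obtain f1 f2 where y: "y = Plus f1 f2" "db [] f = db [] f2" using db_nil_cases(3)[of y "db [] e" "db [] f"] by auto
  obtain y' where "step f2 a y'" "db [] f' = db [] y'" using 3(2)[OF y(2)] by blast
  then show ?case using y by (auto intro: step.intros)
next
  case (4 e a e' v)
  obtain w f where y: "y = Mu w f" "db [v] e = db [w] f" using db_nil_cases(1)[of y "db [v] e"] 4(3) by auto
  have fvs: "fv e - {v} = fv f - {w}" using arg_cong[OF y(2), of lfv] by (simp add: lfv_db)
  define \<tau> where "\<tau> = (Var(w := Var v) :: nat \<Rightarrow> 'a exp)"
  define y0 where "y0 = subst \<tau> f"
  have "db [v] y0 = lsubst (\<lambda>u. db [] (\<tau> u)) (db [w] f)"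
    unfolding y0_def
  proof (rule db_subst)
    fix u assume u: "u \<in> fv f"
    show "(u \<in> set [w] \<longrightarrow> \<tau> u = Var ([v] ! idx [w] u) \<and> idx [v] ([v] ! idx [w] u) = idx [w] u) \<and>
          (u \<notin> set [w] \<longrightarrow> fv (\<tau> u) \<inter> set [v] = {})"
      using u fvs unfolding \<tau>_def by auto
  qed simp
  also have "\<dots> = db [w] f"
    by (rule lsubst_LFree) (auto simp: lfv_db \<tau>_def)
  finally have "db [v] e = db [v] y0" using y(2) by simp
  then have "db [] e = db [] y0" by (rule db_open1)
  then obtain y0' where y0': "step y0 a y0'" "db [] e' = db [] y0'" using 4(2) by blast
  from subst_step[OF y0'(1)[unfolded y0_def]]
  obtain f' where f': "step f a f'" "db [] y0' = db [] (subst \<tau> f')"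
    by (auto simp: \<tau>_def split: if_splits elim: stepE)
  have st: "step y a (subst (Var(w := Mu w f)) f')" unfolding y(1) by (rule step.intros) (rule f'(1))
  have dbXY: "db [] (Mu v e) = db [] (Mu w f)" using y(2) by simp
  have "db [] (subst (Var(v := Mu v e)) e') = lsubst (\<lambda>u. db [] ((Var(v := Mu v e)) u)) (db [] e')"
    by (rule db_subst0)
  also have "\<dots> = lsubst (\<lambda>u. db [] ((Var(v := Mu v e)) u)) (db [] (subst \<tau> f'))"
    using y0'(2) f'(2) by simp
  also have "\<dots> = db [] (subst (Var(v := Mu v e)) (subst \<tau> f'))"
    by (rule db_subst0[symmetric])
  also have "\<dots> = db [] (subst (Var(v := Mu w f)) (subst \<tau> f'))"
    by (rule db_subst_cong) (use dbXY in auto)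
  also have "\<dots> = db [] (subst (\<lambda>u. subst (Var(v := Mu w f)) (\<tau> u)) f')"
    by (rule db_subst_comp)
  also have "subst (\<lambda>u. subst (Var(v := Mu w f)) (\<tau> u)) f' = subst (Var(w := Mu w f)) f'"
  proof (rule subst_cong)
    fix u assume u: "u \<in> fv f'"
    then have "u \<in> fv f" using step_fv[OF f'(1)] by auto
    then show "subst (Var(v := Mu w f)) (\<tau> u) = (Var(w := Mu w f)) u"
      using fvs unfolding \<tau>_def by auto
  qed
  finally show ?case using st by blast
qed



fun Ek :: "nat \<Rightarrow> 'a exp \<Rightarrow> 'a exp \<Rightarrow> bool" where
  "Ek 0 x y = True"
| "Ek (Suc k) x y = ((\<forall>v. out x v \<longleftrightarrow> out y v)
     \<and> (\<forall>a x'. step x a x' \<longrightarrow> (\<exists>y'. step y a y' \<and> Ek k x' y'))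
     \<and> (\<forall>a y'. step y a y' \<longrightarrow> (\<exists>x'. step x a x' \<and> Ek k x' y')))"

lemma Ek_refl: "Ek k x x"
  by (induct k arbitrary: x) auto

lemma Ek_sym: "Ek k x y \<Longrightarrow> Ek k y x"
proof (induct k arbitrary: x y)
  case (Suc k)
  show ?case unfolding Ek.simps
  proof (intro conjI allI impI)
    fix v show "out y v \<longleftrightarrow> out x v" using Suc.prems by simp
  next
    fix a y' assume "step y a y'"
    then obtain x' where "step x a x'" "Ek k x' y'" using Suc.prems by (simp only: Ek.simps) blast
    then show "\<exists>x'. step x a x' \<and> Ek k y' x'" using Suc.hyps by blast
  next
    fix a x' assume "step x a x'"
    then obtain y' where "step y a y'" "Ek k x' y'" using Suc.prems by (simp only: Ek.simps) blast
    then show "\<exists>y'. step y a y' \<and> Ek k y' x'" using Suc.hyps by blast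
  qed
qed simp

lemma Ek_trans: "Ek k x y \<Longrightarrow> Ek k y z \<Longrightarrow> Ek k x z"
proof (induct k arbitrary: x y z)
  case (Suc k)
  show ?case unfolding Ek.simps
  proof (intro conjI allI impI)
    fix v show "out x v \<longleftrightarrow> out z v" using Suc.prems by simp
  next
    fix a x' assume "step x a x'"
    then obtain y' where "step y a y'" "Ek k x' y'" using Suc.prems(1) by (simp only: Ek.simps) blast
    moreover then obtain z' where "step z a z'" "Ek k y' z'" using Suc.prems(2) by (simp only: Ek.simps) blast
    ultimately show "\<exists>z'. step z a z' \<and> Ek k x' z'" using Suc.hyps by blast
  next
    fix a z' assume "step z a z'"
    then obtain y' where "step y a y'" "Ek k y' z'" using Suc.prems(2) by (simp only: Ek.simps) blast
    moreover then obtain x' where "step x a x'" "Ek k x' y'" using Suc.prems(1) by (simp only: Ek.simps) blast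
    ultimately show "\<exists>x'. step x a x' \<and> Ek k x' z'" using Suc.hyps by blast
  qed
qed simp

lemma Ek_mono: "Ek (Suc k) x y \<Longrightarrow> Ek k x y"
proof (induct k arbitrary: x y)
  case (Suc k)
  have P: "(\<forall>v. out x v \<longleftrightarrow> out y v)
     \<and> (\<forall>a x'. step x a x' \<longrightarrow> (\<exists>y'. step y a y' \<and> Ek (Suc k) x' y'))
     \<and> (\<forall>a y'. step y a y' \<longrightarrow> (\<exists>x'. step x a x' \<and> Ek (Suc k) x' y'))"
    using Suc.prems unfolding Ek.simps(2)[of "Suc k" x y] .
  show ?case unfolding Ek.simps(2)[of k x y]
  proof (intro conjI allI impI)
    fix v show "out x v \<longleftrightarrow> out y v" using P by blast
  next
    fix a x' assume "step x a x'"
    then obtain y' where "step y a y'" "Ek (Suc k) x' y'" using P by blast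
    then show "\<exists>y'. step y a y' \<and> Ek k x' y'" using Suc.hyps by blast
  next
    fix a y' assume "step y a y'"
    then obtain x' where "step x a x'" "Ek (Suc k) x' y'" using P by blast
    then show "\<exists>x'. step x a x' \<and> Ek k x' y'" using Suc.hyps by blast
  qed
qed simp

lemma Ek_le: "j \<le> k \<Longrightarrow> Ek k x y \<Longrightarrow> Ek j x y"
proof (induct k)
  case 0
  then show ?case by simp
next
  case (Suc k)
  show ?case
  proof (cases "j = Suc k")
    case True
    then show ?thesis using Suc.prems by simp
  next
    case False
    then have "j \<le> k" using Suc.prems by simp
    moreover have "Ek k x y" using Ek_mono Suc.prems(2) by blast
    ultimately show ?thesis using Suc.hyps by blast
  qed
qed

lemma alpha_Ek: "db [] x = db [] y \<Longrightarrow> Ek k x y"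
proof (induct k arbitrary: x y)
  case (Suc k)
  show ?case unfolding Ek.simps(2)[of k x y]
  proof (intro conjI allI impI)
    fix v
    have "out x v \<longleftrightarrow> lout (db [] x) v" using lout_db[of "[]" x v] by simp
    also have "\<dots> \<longleftrightarrow> lout (db [] y) v" using Suc.prems by simp
    also have "\<dots> \<longleftrightarrow> out y v" using lout_db[of "[]" y v] by simp
    finally show "out x v \<longleftrightarrow> out y v" .
  next
    fix a x' assume "step x a x'"
    from alpha_step[OF this Suc.prems] obtain y' where "step y a y'" "db [] x' = db [] y'" by blast
    moreover from this(2) have "Ek k x' y'" by (rule Suc.hyps)
    ultimately show "\<exists>y'. step y a y' \<and> Ek k x' y'" by blast
  next
    fix a y' assume "step y a y'"
    from alpha_step[OF this Suc.prems[symmetric]] obtain x' where "step x a x'" "db [] y' = db [] x'" by blast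
    moreover from this(2)[symmetric] have "Ek k x' y'" by (rule Suc.hyps)
    ultimately show "\<exists>x'. step x a x' \<and> Ek k x' y'" by blast
  qed
qed simp

lemma Ek_unfold: "Ek (Suc k) x y \<Longrightarrow> (\<forall>v. out x v \<longleftrightarrow> out y v)
     \<and> (\<forall>a x'. step x a x' \<longrightarrow> (\<exists>y'. step y a y' \<and> Ek k x' y'))
     \<and> (\<forall>a y'. step y a y' \<longrightarrow> (\<exists>x'. step x a x' \<and> Ek k x' y'))"
  unfolding Ek.simps(2)[of k x y] .

lemma Ek_subst_half:
  fixes s t :: "'a exp"
  assumes IH: "\<And>(s::'a exp) t \<sigma> \<tau>. Ek k s t \<Longrightarrow> (\<forall>u. Ek k (\<sigma> u) (\<tau> u)) \<Longrightarrow> Ek k (subst \<sigma> s) (subst \<tau> t)"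
    and st: "Ek (Suc k) s t" and su: "\<forall>u. Ek (Suc k) (\<sigma> u) (\<tau> u)"
    and r: "step (subst \<sigma> s) a r"
  shows "\<exists>r'. step (subst \<tau> t) a r' \<and> Ek k r r'"
  using subst_step[OF r]
proof
  assume "\<exists>u. out s u \<and> step (\<sigma> u) a r"
  then obtain u where u: "out s u" "step (\<sigma> u) a r" by blast
  have ot: "out t u" using Ek_unfold[OF st] u(1) by blast
  obtain r' where r': "step (\<tau> u) a r'" "Ek k r r'" using Ek_unfold[OF su[rule_format, of u]] u(2) by blast
  have "step (subst \<tau> t) a r'" by (rule step_subst_out[where \<sigma>=\<tau>, OF ot r'(1)])
  then show ?thesis using r'(2) by blast
next
  assume "\<exists>s'. step s a s' \<and> db [] r = db [] (subst \<sigma> s')"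
  then obtain s' where s': "step s a s'" "db [] r = db [] (subst \<sigma> s')" by blast
  obtain t' where t': "step t a t'" "Ek k s' t'" using Ek_unfold[OF st] s'(1) by blast
  obtain r' where r': "step (subst \<tau> t) a r'" "db [] r' = db [] (subst \<tau> t')"
    using step_subst_step[OF t'(1)] by blast
  have "\<forall>u. Ek k (\<sigma> u) (\<tau> u)" using su Ek_mono by blast
  then have "Ek k (subst \<sigma> s') (subst \<tau> t')" by (rule IH[OF t'(2)])
  moreover have "Ek k r (subst \<sigma> s')" using s'(2) by (rule alpha_Ek)
  moreover have "Ek k (subst \<tau> t') r'" using r'(2)[symmetric] by (rule alpha_Ek)
  ultimately have "Ek k r r'" using Ek_trans by blast
  then show ?thesis using r'(1) by blast
qed

lemma Ek_subst: "Ek k s t \<Longrightarrow> (\<forall>u. Ek k (\<sigma> u) (\<tau> u)) \<Longrightarrow> Ek k (subst \<sigma> s) (subst \<tau> t)"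
proof (induct k arbitrary: s t \<sigma> \<tau>)
  case (Suc k)
  show ?case unfolding Ek.simps(2)[of k "subst \<sigma> s" "subst \<tau> t"]
  proof (intro conjI allI impI)
    fix v
    have o1: "\<forall>v. out s v \<longleftrightarrow> out t v" using Ek_unfold[OF Suc.prems(1)] by blast
    have o2: "\<forall>u v. out (\<sigma> u) v \<longleftrightarrow> out (\<tau> u) v" using Suc.prems(2) Ek_unfold by blast
    show "out (subst \<sigma> s) v \<longleftrightarrow> out (subst \<tau> t) v"
      unfolding out_subst using o1 o2 by blast
  next
    fix a x' assume x': "step (subst \<sigma> s) a x'"
    show "\<exists>y'. step (subst \<tau> t) a y' \<and> Ek k x' y'"
      using Ek_subst_half[where k=k, OF Suc.hyps Suc.prems(1) Suc.prems(2) x'] .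
  next
    fix a y' assume y': "step (subst \<tau> t) a y'"
    have su: "\<forall>u. Ek (Suc k) (\<tau> u) (\<sigma> u)" using Suc.prems(2) Ek_sym by blast
    have "\<exists>x'. step (subst \<sigma> s) a x' \<and> Ek k y' x'"
      by (rule Ek_subst_half[where k=k, OF Suc.hyps Ek_sym[OF Suc.prems(1)] su y']) (assumption+)
    then show "\<exists>x'. step (subst \<sigma> s) a x' \<and> Ek k x' y'" using Ek_sym by blast
  qed
qed simp



definition dd :: "'a exp \<Rightarrow> 'a exp \<Rightarrow> real" where
  "dd x y = (if \<forall>k. Ek k x y then 0 else (1/2) ^ (LEAST k. \<not> Ek (Suc k) x y))"

lemma dd_least:
  assumes "\<not> (\<forall>k. Ek k x y)"
  obtains n where "\<not> Ek (Suc n) x y" "Ek n x y" "dd x y = (1/2) ^ n"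
proof -
  obtain k where k: "\<not> Ek k x y" using assms by blast
  then obtain m where m: "\<not> Ek (Suc m) x y" by (cases k) auto
  define n where "n = (LEAST k. \<not> Ek (Suc k) x y)"
  have n1: "\<not> Ek (Suc n) x y" unfolding n_def using m by (rule LeastI)
  have n2: "Ek n x y"
  proof (cases n)
    case 0
    then show ?thesis by simp
  next
    case (Suc p)
    have "p < n" using Suc by simp
    then have "\<not> \<not> Ek (Suc p) x y" unfolding n_def by (rule not_less_Least)
    then show ?thesis using Suc by simp
  qed
  have "dd x y = (1/2) ^ n" unfolding dd_def n_def using assms by simp
  then show ?thesis using n1 n2 that by blast
qed

lemma dd_le_iff: "dd x y \<le> (1/2) ^ k \<longleftrightarrow> Ek k x y"
proof
  assume a: "dd x y \<le> (1/2) ^ k"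
  show "Ek k x y"
  proof (rule ccontr)
    assume nk: "\<not> Ek k x y"
    then have "\<not> (\<forall>k. Ek k x y)" by blast
    then obtain n where n: "\<not> Ek (Suc n) x y" "Ek n x y" "dd x y = (1/2) ^ n" by (rule dd_least)
    have "n < k"
    proof (rule ccontr)
      assume "\<not> n < k" then have "k \<le> n" by simp
      then have "Ek k x y" using n(2) by (rule Ek_le)
      then show False using nk by blast
    qed
    then have "(1/2::real) ^ k < (1/2) ^ n" by (rule power_strict_decreasing) auto
    then show False using a n(3) by simp
  qed
next
  assume a: "Ek k x y"
  show "dd x y \<le> (1/2) ^ k"
  proof (cases "\<forall>k. Ek k x y")
    case True
    then show ?thesis unfolding dd_def by simp
  next
    case False
    then obtain n where n: "\<not> Ek (Suc n) x y" "Ek n x y" "dd x y = (1/2) ^ n" by (rule dd_least)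
    have "k \<le> n"
    proof (rule ccontr)
      assume "\<not> k \<le> n" then have "Suc n \<le> k" by simp
      then have "Ek (Suc n) x y" using a by (rule Ek_le)
      then show False using n(1) by blast
    qed
    then have "(1/2::real) ^ n \<le> (1/2) ^ k" by (rule power_decreasing) auto
    then show ?thesis using n(3) by simp
  qed
qed

lemma dd_ge: "\<not> Ek (Suc j) x y \<Longrightarrow> (1/2) ^ j \<le> dd x y"
proof -
  assume nj: "\<not> Ek (Suc j) x y"
  then have "\<not> (\<forall>k. Ek k x y)" by blast
  then obtain n where n: "\<not> Ek (Suc n) x y" "Ek n x y" "dd x y = (1/2) ^ n" by (rule dd_least)
  have "n \<le> j"
  proof (rule ccontr)
    assume "\<not> n \<le> j" then have "Suc j \<le> n" by simp
    then have "Ek (Suc j) x y" using n(2) by (rule Ek_le)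
    then show False using nj by blast
  qed
  then have "(1/2::real) ^ j \<le> (1/2) ^ n" by (rule power_decreasing) auto
  then show ?thesis using n(3) by simp
qed

lemma dd_nonneg: "0 \<le> dd x y"
  unfolding dd_def by simp

lemma dd_le1: "dd x y \<le> 1"
  using dd_le_iff[of x y 0] by simp

lemma dd_refl: "dd x x = 0"
  unfolding dd_def using Ek_refl by metis

lemma Ek_sym_iff: "Ek k x y \<longleftrightarrow> Ek k y x"
  using Ek_sym by blast

lemma dd_sym: "dd x y = dd y x"
  unfolding dd_def Ek_sym_iff[of _ x y] ..

lemma le_pow_half_0: "(\<And>k. (z::real) \<le> (1/2) ^ k) \<Longrightarrow> z \<le> 0"
proof (rule ccontr)
  assume a: "\<And>k. z \<le> (1/2) ^ k" and "\<not> z \<le> 0"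
  then have "z > 0" by simp
  then obtain n where "(1/2::real) ^ n < z" using real_arch_pow_inv[of z "1/2"] by auto
  then show False using a[of n] by simp
qed

lemma dd_cmp: "(\<And>k. dd x y \<le> (1/2) ^ k \<Longrightarrow> Ek k x' y') \<Longrightarrow> dd x' y' \<le> dd x y"
proof -
  assume a: "\<And>k. dd x y \<le> (1/2) ^ k \<Longrightarrow> Ek k x' y'"
  show ?thesis
  proof (cases "\<forall>k. Ek k x y")
    case True
    then have "dd x y = 0" unfolding dd_def by simp
    then have "\<And>k. Ek k x' y'" using a by simp
    then have "dd x' y' = 0" unfolding dd_def by simp
    then show ?thesis using dd_nonneg by simp
  next
    case False
    then obtain n where n: "\<not> Ek (Suc n) x y" "Ek n x y" "dd x y = (1/2) ^ n" by (rule dd_least)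
    have "Ek n x' y'" using a n(3) by simp
    then have "dd x' y' \<le> (1/2) ^ n" using dd_le_iff by blast
    then show ?thesis using n(3) by simp
  qed
qed

lemma dd_ultra: "dd x z \<le> max (dd x y) (dd y z)"
proof (cases "dd y z \<le> dd x y")
  case True
  have "dd x z \<le> dd x y"
  proof (rule dd_cmp)
    fix k assume "dd x y \<le> (1/2) ^ k"
    then have "Ek k x y" "Ek k y z" using True dd_le_iff by (blast, fastforce)
    then show "Ek k x z" by (rule Ek_trans)
  qed
  then show ?thesis by simp
next
  case False
  have "dd x z \<le> dd y z"
  proof (rule dd_cmp)
    fix k assume "dd y z \<le> (1/2) ^ k"
    then have "Ek k x y" "Ek k y z" using False dd_le_iff by (fastforce, blast)
    then show "Ek k x z" by (rule Ek_trans)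
  qed
  then show ?thesis by simp
qed

lemma dd_cong: "(\<And>k. Ek k x x') \<Longrightarrow> (\<And>k. Ek k y y') \<Longrightarrow> dd x y = dd x' y'"
proof -
  assume a: "\<And>k. Ek k x x'" and b: "\<And>k. Ek k y y'"
  have "\<And>k. Ek k x y = Ek k x' y'"
    by (meson Ek_sym Ek_trans a b)
  then show ?thesis unfolding dd_def by simp
qed



lemma bisim_refl: "bisim x x"
proof -
  have "bisimulation Id" unfolding bisimulation_def by auto
  then show ?thesis unfolding bisim_def by blast
qed

lemma bisimulationD: "bisimulation R \<Longrightarrow> (x, y) \<in> R \<Longrightarrow> (\<forall>v. out x v \<longleftrightarrow> out y v)
    \<and> (\<forall>a x'. step x a x' \<longrightarrow> (\<exists>y'. step y a y' \<and> (x', y') \<in> R))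
    \<and> (\<forall>a y'. step y a y' \<longrightarrow> (\<exists>x'. step x a x' \<and> (x', y') \<in> R))"
  unfolding bisimulation_def by blast

lemma bisimulationI: "(\<And>x y. (x, y) \<in> R \<Longrightarrow> (\<forall>v. out x v \<longleftrightarrow> out y v)
    \<and> (\<forall>a x'. step x a x' \<longrightarrow> (\<exists>y'. step y a y' \<and> (x', y') \<in> R))
    \<and> (\<forall>a y'. step y a y' \<longrightarrow> (\<exists>x'. step x a x' \<and> (x', y') \<in> R))) \<Longrightarrow> bisimulation R"
  unfolding bisimulation_def by blast

lemma bisim_sym: "bisim x y \<Longrightarrow> bisim y x"
proof -
  assume "bisim x y"
  then obtain R where R: "bisimulation R" "(x, y) \<in> R" unfolding bisim_def by blast
  have "bisimulation (R\<inverse>)"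
  proof (rule bisimulationI)
    fix p q assume "(p, q) \<in> R\<inverse>"
    then have "(q, p) \<in> R" by simp
    note A = bisimulationD[OF R(1) this]
    show "(\<forall>v. out p v \<longleftrightarrow> out q v)
    \<and> (\<forall>a x'. step p a x' \<longrightarrow> (\<exists>y'. step q a y' \<and> (x', y') \<in> R\<inverse>))
    \<and> (\<forall>a y'. step q a y' \<longrightarrow> (\<exists>x'. step p a x' \<and> (x', y') \<in> R\<inverse>))"
    proof (intro conjI allI impI)
      fix v show "out p v \<longleftrightarrow> out q v" using A by blast
    next
      fix a x' assume "step p a x'"
      then obtain y' where "step q a y'" "(y', x') \<in> R" using A by blast
      then show "\<exists>y'. step q a y' \<and> (x', y') \<in> R\<inverse>" by blast
    next
      fix a y' assume "step q a y'"
      then obtain x' where "step p a x'" "(y', x') \<in> R" using A by blast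
      then show "\<exists>x'. step p a x' \<and> (x', y') \<in> R\<inverse>" by blast
    qed
  qed
  then show ?thesis unfolding bisim_def using R(2) by blast
qed

lemma bisim_trans: "bisim x y \<Longrightarrow> bisim y z \<Longrightarrow> bisim x z"
proof -
  assume "bisim x y" "bisim y z"
  then obtain R S where R: "bisimulation R" "(x, y) \<in> R" and S: "bisimulation S" "(y, z) \<in> S"
    unfolding bisim_def by blast
  have "bisimulation (R O S)"
  proof (rule bisimulationI)
    fix p r assume "(p, r) \<in> R O S"
    then obtain q where pq: "(p, q) \<in> R" and qr: "(q, r) \<in> S" by blast
    note A = bisimulationD[OF R(1) pq]
    note B = bisimulationD[OF S(1) qr]
    show "(\<forall>v. out p v \<longleftrightarrow> out r v)
    \<and> (\<forall>a x'. step p a x' \<longrightarrow> (\<exists>y'. step r a y' \<and> (x', y') \<in> R O S))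
    \<and> (\<forall>a y'. step r a y' \<longrightarrow> (\<exists>x'. step p a x' \<and> (x', y') \<in> R O S))"
    proof (intro conjI allI impI)
      fix v show "out p v \<longleftrightarrow> out r v" using A B by blast
    next
      fix a x' assume "step p a x'"
      then obtain y' where y': "step q a y'" "(x', y') \<in> R" using A by blast
      then obtain z' where "step r a z'" "(y', z') \<in> S" using B by blast
      then show "\<exists>z'. step r a z' \<and> (x', z') \<in> R O S" using y' by blast
    next
      fix a z' assume "step r a z'"
      then obtain y' where y': "step q a y'" "(y', z') \<in> S" using B by blast
      then obtain x' where "step p a x'" "(x', y') \<in> R" using A by blast
      then show "\<exists>x'. step p a x' \<and> (x', z') \<in> R O S" using y' by blast
    qed
  qed
  then show ?thesis unfolding bisim_def using R(2) S(2) by blast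
qed

lemma bisim_unfold: "bisim x y \<Longrightarrow> (\<forall>v. out x v = out y v)
   \<and> (\<forall>a x'. step x a x' \<longrightarrow> (\<exists>y'. step y a y' \<and> bisim x' y'))
   \<and> (\<forall>a y'. step y a y' \<longrightarrow> (\<exists>x'. step x a x' \<and> bisim x' y'))"
proof -
  assume "bisim x y"
  then obtain R where R: "bisimulation R" "(x, y) \<in> R" unfolding bisim_def by blast
  note A = bisimulationD[OF R]
  have I: "\<And>p q. (p, q) \<in> R \<Longrightarrow> bisim p q" unfolding bisim_def using R(1) by blast
  show ?thesis
  proof (intro conjI allI impI)
    fix v show "out x v = out y v" using A by blast
  next
    fix a x' assume "step x a x'"
    then obtain y' where "step y a y'" "(x', y') \<in> R" using A by blast
    then show "\<exists>y'. step y a y' \<and> bisim x' y'" using I by blast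
  next
    fix a y' assume "step y a y'"
    then obtain x' where "step x a x'" "(x', y') \<in> R" using A by blast
    then show "\<exists>x'. step x a x' \<and> bisim x' y'" using I by blast
  qed
qed

lemma bisim_Ek: "bisim x y \<Longrightarrow> Ek k x y"
proof (induct k arbitrary: x y)
  case (Suc k)
  note B = bisim_unfold[OF Suc.prems]
  show ?case unfolding Ek.simps(2)[of k x y]
  proof (intro conjI allI impI)
    fix v show "out x v = out y v" using B by blast
  next
    fix a x' assume "step x a x'"
    then obtain y' where "step y a y'" "bisim x' y'" using B by blast
    then show "\<exists>y'. step y a y' \<and> Ek k x' y'" using Suc.hyps by blast
  next
    fix a y' assume "step y a y'"
    then obtain x' where "step x a x'" "bisim x' y'" using B by blast
    then show "\<exists>x'. step x a x' \<and> Ek k x' y'" using Suc.hyps by blast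
  qed
qed simp

lemma mem_cls: "e \<in> cls x \<longleftrightarrow> bisim x e"
  unfolding cls_def by simp

lemma cls_eq: "bisim x y \<Longrightarrow> cls x = cls y"
  unfolding cls_def using bisim_sym bisim_trans by blast

lemma cls_Q: "cls x \<in> Q"
  unfolding Q_def by simp

lemma beta_cls: "beta (cls x) = {Inl (a, cls x') | a x'. step x a x'} \<union> {Inr v | v. out x v}"
proof (rule set_eqI)
  fix p
  show "p \<in> beta (cls x) \<longleftrightarrow> p \<in> {Inl (a, cls x') | a x'. step x a x'} \<union> {Inr v | v. out x v}"
  proof
    assume "p \<in> beta (cls x)"
    then consider (l) a e e' where "p = Inl (a, cls e')" "bisim x e" "step e a e'"
      | (r) v e where "p = Inr v" "bisim x e" "out e v"
      unfolding beta_def mem_cls by blast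
    then show "p \<in> {Inl (a, cls x') | a x'. step x a x'} \<union> {Inr v | v. out x v}"
    proof cases
      case l
      then obtain x' where "step x a x'" "bisim x' e'" using bisim_unfold[OF l(2)] by blast
      then show ?thesis using l(1) cls_eq by blast
    next
      case r
      then show ?thesis using bisim_unfold[OF r(2)] by blast
    qed
  next
    assume "p \<in> {Inl (a, cls x') | a x'. step x a x'} \<union> {Inr v | v. out x v}"
    then show "p \<in> beta (cls x)" unfolding beta_def mem_cls using bisim_refl by blast
  qed
qed

definition rep :: "'a exp set \<Rightarrow> 'a exp" where
  "rep X = (SOME x. X = cls x)"

definition DD :: "'a exp set \<Rightarrow> 'a exp set \<Rightarrow> real" where
  "DD X Y = (if X \<in> Q \<and> Y \<in> Q then dd (rep X) (rep Y) else 0)"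

lemma rep_Ek: "Ek k x (rep (cls x))"
proof -
  have "cls x = cls (rep (cls x))" unfolding rep_def by (rule someI) (rule refl)
  moreover have "rep (cls x) \<in> cls (rep (cls x))" using bisim_refl mem_cls by blast
  ultimately have "bisim x (rep (cls x))" using mem_cls by metis
  then show ?thesis by (rule bisim_Ek)
qed

lemma DD_cls: "DD (cls x) (cls y) = dd x y"
proof -
  have "DD (cls x) (cls y) = dd (rep (cls x)) (rep (cls y))" unfolding DD_def using cls_Q[of x] cls_Q[of y] by simp
  also have "\<dots> = dd x y" by (rule dd_cong[symmetric]) (rule rep_Ek)+
  finally show ?thesis .
qed

lemma Q_cases: "X \<in> Q \<Longrightarrow> (\<And>x. X = cls x \<Longrightarrow> P) \<Longrightarrow> P"
  unfolding Q_def by blast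

lemma inf1_le: "q \<in> B \<Longrightarrow> (\<forall>q\<in>B. 0 \<le> f q) \<Longrightarrow> f q \<le> c \<Longrightarrow> inf1 (f ` B) \<le> c"
proof -
  assume q: "q \<in> B" and nn: "\<forall>q\<in>B. 0 \<le> f q" and c: "f q \<le> c"
  have "Inf (f ` B) \<le> f q" by (rule cInf_lower) (use q nn in \<open>auto intro: bdd_belowI2\<close>)
  then show ?thesis unfolding inf1_def using q c by auto
qed

lemma inf1_ge: "(\<forall>q\<in>B. c \<le> f q) \<Longrightarrow> c \<le> 1 \<Longrightarrow> c \<le> inf1 (f ` B)"
proof -
  assume a: "\<forall>q\<in>B. c \<le> f q" and c: "c \<le> 1"
  show ?thesis
  proof (cases "B = {}")
    case True
    then show ?thesis unfolding inf1_def using c by simp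
  next
    case False
    then have "c \<le> Inf (f ` B)" using a by (intro cInf_greatest) auto
    then show ?thesis unfolding inf1_def using False by simp
  qed
qed

lemma inf1_le1: "(\<forall>q\<in>B. 0 \<le> f q \<and> f q \<le> 1) \<Longrightarrow> inf1 (f ` B) \<le> 1"
proof (cases "B = {}")
  case True
  then show ?thesis unfolding inf1_def by simp
next
  case False
  assume a: "\<forall>q\<in>B. 0 \<le> f q \<and> f q \<le> 1"
  then obtain q where "q \<in> B" using False by blast
  then show ?thesis using a by (intro inf1_le[of q]) auto
qed

lemma sup0_le: "(\<forall>p\<in>A. f p \<le> c) \<Longrightarrow> 0 \<le> c \<Longrightarrow> sup0 (f ` A) \<le> c"
  unfolding sup0_def by (auto intro: cSup_least)

lemma sup0_ge: "p \<in> A \<Longrightarrow> (\<forall>p\<in>A. f p \<le> 1) \<Longrightarrow> c \<le> f p \<Longrightarrow> c \<le> sup0 (f ` A)"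
proof -
  assume p: "p \<in> A" and b: "\<forall>p\<in>A. f p \<le> 1" and c: "c \<le> f p"
  have "f p \<le> Sup (f ` A)" by (rule cSup_upper) (use p b in \<open>auto intro: bdd_aboveI2\<close>)
  then show ?thesis unfolding sup0_def using p c by auto
qed

definition bnd :: "('c \<Rightarrow> 'c \<Rightarrow> real) \<Rightarrow> 'c set \<Rightarrow> bool" where
  "bnd \<delta> C = (\<forall>p\<in>C. \<forall>q\<in>C. 0 \<le> \<delta> p q \<and> \<delta> p q \<le> 1)"

lemma H_le: "bnd \<delta> (A \<union> B) \<Longrightarrow> 0 \<le> c \<Longrightarrow> (\<forall>p\<in>A. \<exists>q\<in>B. \<delta> p q \<le> c) \<Longrightarrow> (\<forall>q\<in>B. \<exists>p\<in>A. \<delta> q p \<le> c)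
  \<Longrightarrow> hausdorff \<delta> A B \<le> c"
proof -
  assume b: "bnd \<delta> (A \<union> B)" and c: "0 \<le> c" and l: "\<forall>p\<in>A. \<exists>q\<in>B. \<delta> p q \<le> c"
    and r: "\<forall>q\<in>B. \<exists>p\<in>A. \<delta> q p \<le> c"
  have 1: "sup0 ((\<lambda>x. inf1 ((\<lambda>y. \<delta> x y) ` B)) ` A) \<le> c"
  proof (rule sup0_le[OF _ c], rule ballI)
    fix p assume p: "p \<in> A"
    then obtain q where "q \<in> B" "\<delta> p q \<le> c" using l by blast
    then show "inf1 ((\<lambda>y. \<delta> p y) ` B) \<le> c" using b p unfolding bnd_def by (intro inf1_le[of q]) auto
  qed
  have 2: "sup0 ((\<lambda>y. inf1 ((\<lambda>x. \<delta> y x) ` A)) ` B) \<le> c"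
  proof (rule sup0_le[OF _ c], rule ballI)
    fix q assume q: "q \<in> B"
    then obtain p where "p \<in> A" "\<delta> q p \<le> c" using r by blast
    then show "inf1 ((\<lambda>x. \<delta> q x) ` A) \<le> c" using b q unfolding bnd_def by (intro inf1_le[of p]) auto
  qed
  show ?thesis unfolding hausdorff_def using 1 2 by simp
qed

lemma H_le1: "bnd \<delta> (A \<union> B) \<Longrightarrow> hausdorff \<delta> A B \<le> 1"
proof -
  assume b: "bnd \<delta> (A \<union> B)"
  have 1: "sup0 ((\<lambda>x. inf1 ((\<lambda>y. \<delta> x y) ` B)) ` A) \<le> 1"
    by (rule sup0_le) (use b in \<open>auto simp: bnd_def intro!: inf1_le1\<close>)
  have 2: "sup0 ((\<lambda>y. inf1 ((\<lambda>x. \<delta> y x) ` A)) ` B) \<le> 1"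
    by (rule sup0_le) (use b in \<open>auto simp: bnd_def intro!: inf1_le1\<close>)
  show ?thesis unfolding hausdorff_def using 1 2 by simp
qed

lemma H_ge1: "bnd \<delta> (A \<union> B) \<Longrightarrow> p \<in> A \<Longrightarrow> (\<forall>q\<in>B. c \<le> \<delta> p q) \<Longrightarrow> c \<le> 1 \<Longrightarrow> c \<le> hausdorff \<delta> A B"
proof -
  assume b: "bnd \<delta> (A \<union> B)" and p: "p \<in> A" and a: "\<forall>q\<in>B. c \<le> \<delta> p q" and c: "c \<le> 1"
  have "c \<le> sup0 ((\<lambda>x. inf1 ((\<lambda>y. \<delta> x y) ` B)) ` A)"
  proof (rule sup0_ge[OF p])
    show "\<forall>p\<in>A. inf1 ((\<lambda>y. \<delta> p y) ` B) \<le> 1"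
      using b by (auto simp: bnd_def intro!: inf1_le1)
    show "c \<le> inf1 ((\<lambda>y. \<delta> p y) ` B)" using a c by (rule inf1_ge)
  qed
  then show ?thesis unfolding hausdorff_def by simp
qed

lemma H_ge2: "bnd \<delta> (A \<union> B) \<Longrightarrow> q \<in> B \<Longrightarrow> (\<forall>p\<in>A. c \<le> \<delta> q p) \<Longrightarrow> c \<le> 1 \<Longrightarrow> c \<le> hausdorff \<delta> A B"
proof -
  assume b: "bnd \<delta> (A \<union> B)" and q: "q \<in> B" and a: "\<forall>p\<in>A. c \<le> \<delta> q p" and c: "c \<le> 1"
  have "c \<le> sup0 ((\<lambda>y. inf1 ((\<lambda>x. \<delta> y x) ` A)) ` B)"
  proof (rule sup0_ge[OF q])
    show "\<forall>q\<in>B. inf1 ((\<lambda>x. \<delta> q x) ` A) \<le> 1"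
      using b by (auto simp: bnd_def intro!: inf1_le1)
    show "c \<le> inf1 ((\<lambda>x. \<delta> q x) ` A)" using a c by (rule inf1_ge)
  qed
  then show ?thesis unfolding hausdorff_def by simp
qed

lemma H_nonneg: "bnd \<delta> (A \<union> B) \<Longrightarrow> 0 \<le> hausdorff \<delta> A B"
proof -
  assume b: "bnd \<delta> (A \<union> B)"
  show ?thesis
  proof (cases "A = {}")
    case True
    then show ?thesis unfolding hausdorff_def sup0_def by simp
  next
    case False
    then obtain p where p: "p \<in> A" by blast
    show ?thesis by (rule H_ge1[OF b p]) (use b p in \<open>auto simp: bnd_def\<close>)
  qed
qed



lemma beta_elem: "p \<in> beta (cls x) \<Longrightarrow> (\<exists>a x'. p = Inl (a, cls x') \<and> step x a x') \<or> (\<exists>v. p = Inr v \<and> out x v)"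
  unfolding beta_cls by blast

lemma lift_bnd:
  assumes b: "\<forall>X\<in>Q. \<forall>Y\<in>Q. 0 \<le> d X Y \<and> d X Y \<le> 1"
  shows "bnd (lift d) (beta (cls x) \<union> beta (cls y))"
  unfolding bnd_def
proof (intro ballI)
  fix p q assume p: "p \<in> beta (cls x) \<union> beta (cls y)" and q: "q \<in> beta (cls x) \<union> beta (cls y)"
  have P: "(\<exists>a x'. p = Inl (a, cls x')) \<or> (\<exists>v. p = Inr v)" using p beta_elem by blast
  have R: "(\<exists>a x'. q = Inl (a, cls x')) \<or> (\<exists>v. q = Inr v)" using q beta_elem by blast
  show "0 \<le> lift d p q \<and> lift d p q \<le> 1"
    using P R
  proof (elim disjE exE)
    fix a x' c y' assume pq: "p = Inl (a, cls x')" "q = Inl (c, cls y')"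
    have "0 \<le> d (cls x') (cls y') \<and> d (cls x') (cls y') \<le> 1" using b cls_Q[of x'] cls_Q[of y'] by blast
    then show ?thesis using pq by (auto simp: lift_def)
  qed (auto simp: lift_def)
qed

lemma DD_bnd: "\<forall>X\<in>Q. \<forall>Y\<in>Q. 0 \<le> DD X Y \<and> DD X Y \<le> 1"
  unfolding DD_def using dd_nonneg dd_le1 by auto

lemma lift_Inl_same: "lift d (Inl (a, X)) (Inl (a, Y)) = d X Y / 2"
  by (simp add: lift_def)

lemma lift_Inl_diff: "a \<noteq> b \<Longrightarrow> lift d (Inl (a, X)) (Inl (b, Y)) = 1"
  by (simp add: lift_def)

lemma lift_mixed: "lift d (Inl p) (Inr v) = 1" "lift d (Inr v) (Inl p) = 1"
  by (auto simp: lift_def split: prod.splits)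

lemma lift_Inr: "lift d (Inr v) (Inr w) = (if v = w then 0 else 1)"
  by (simp add: lift_def)

lemma PU: "Ek k x y \<Longrightarrow> Phi DD (cls x) (cls y) \<le> (1/2) ^ k"
proof (cases k)
  case 0
  then show ?thesis unfolding Phi_def using H_le1[OF lift_bnd[OF DD_bnd]] by simp
next
  case (Suc j)
  assume "Ek k x y"
  then have E: "(\<forall>v. out x v \<longleftrightarrow> out y v)
     \<and> (\<forall>a x'. step x a x' \<longrightarrow> (\<exists>y'. step y a y' \<and> Ek j x' y'))
     \<and> (\<forall>a y'. step y a y' \<longrightarrow> (\<exists>x'. step x a x' \<and> Ek j x' y'))" using Suc Ek_unfold by blast
  have "hausdorff (lift DD) (beta (cls x)) (beta (cls y)) \<le> (1/2) ^ Suc j"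
  proof (rule H_le[OF lift_bnd[OF DD_bnd]])
    show "0 \<le> (1/2::real) ^ Suc j" by simp
  next
    show "\<forall>p\<in>beta (cls x). \<exists>q\<in>beta (cls y). lift DD p q \<le> (1/2) ^ Suc j"
    proof
      fix p assume "p \<in> beta (cls x)"
      then consider (l) a x' where "p = Inl (a, cls x')" "step x a x'" | (r) v where "p = Inr v" "out x v"
        using beta_elem by blast
      then show "\<exists>q\<in>beta (cls y). lift DD p q \<le> (1/2) ^ Suc j"
      proof cases
        case l
        then obtain y' where y': "step y a y'" "Ek j x' y'" using E by blast
        then have "Inl (a, cls y') \<in> beta (cls y)" unfolding beta_cls by blast
        moreover have "lift DD p (Inl (a, cls y')) \<le> (1/2) ^ Suc j"
          using l(1) y'(2) dd_le_iff[of x' y' j] by (simp add: lift_Inl_same DD_cls)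
        ultimately show ?thesis by blast
      next
        case r
        then have "Inr v \<in> beta (cls y)" unfolding beta_cls using E by blast
        moreover have "lift DD p (Inr v) \<le> (1/2) ^ Suc j" using r(1) by (simp add: lift_Inr)
        ultimately show ?thesis by blast
      qed
    qed
  next
    show "\<forall>q\<in>beta (cls y). \<exists>p\<in>beta (cls x). lift DD q p \<le> (1/2) ^ Suc j"
    proof
      fix q assume "q \<in> beta (cls y)"
      then consider (l) a y' where "q = Inl (a, cls y')" "step y a y'" | (r) v where "q = Inr v" "out y v"
        using beta_elem by blast
      then show "\<exists>p\<in>beta (cls x). lift DD q p \<le> (1/2) ^ Suc j"
      proof cases
        case l
        then obtain x' where x': "step x a x'" "Ek j x' y'" using E by blast
        then have "Inl (a, cls x') \<in> beta (cls x)" unfolding beta_cls by blast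
        moreover have "Ek j y' x'" using x'(2) by (rule Ek_sym)
        then have "lift DD q (Inl (a, cls x')) \<le> (1/2) ^ Suc j"
          using l(1) dd_le_iff[of y' x' j] by (simp add: lift_Inl_same DD_cls)
        ultimately show ?thesis by blast
      next
        case r
        then have "Inr v \<in> beta (cls x)" unfolding beta_cls using E by blast
        moreover have "lift DD q (Inr v) \<le> (1/2) ^ Suc j" using r(1) by (simp add: lift_Inr)
        ultimately show ?thesis by blast
      qed
    qed
  qed
  then show ?thesis unfolding Phi_def using Suc by simp
qed

lemma PL:
  assumes b: "\<forall>X\<in>Q. \<forall>Y\<in>Q. 0 \<le> d X Y \<and> d X Y \<le> 1"
    and H: "\<And>x' y'. \<not> Ek k x' y' \<Longrightarrow> 2 * (1/2) ^ k \<le> d (cls x') (cls y')"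
    and n: "\<not> Ek (Suc k) x y"
  shows "(1/2) ^ k \<le> Phi d (cls x) (cls y)"
proof -
  note B = lift_bnd[OF b, of x y]
  have c1: "(1/2::real) ^ k \<le> 1" by (simp add: power_le_one)
  have n': "\<not> ((\<forall>v. out x v \<longleftrightarrow> out y v)
     \<and> (\<forall>a x'. step x a x' \<longrightarrow> (\<exists>y'. step y a y' \<and> Ek k x' y'))
     \<and> (\<forall>a y'. step y a y' \<longrightarrow> (\<exists>x'. step x a x' \<and> Ek k x' y')))"
    using n unfolding Ek.simps(2)[of k x y] .
  have "(1/2) ^ k \<le> hausdorff (lift d) (beta (cls x)) (beta (cls y))"
  proof (cases "\<forall>v. out x v \<longleftrightarrow> out y v")
    case False
    then obtain v where v: "out x v \<noteq> out y v" by blast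
    show ?thesis
    proof (cases "out x v")
      case True
      then have ov: "\<not> out y v" using v by blast
      have p: "Inr v \<in> beta (cls x)" unfolding beta_cls using True by blast
      show ?thesis
      proof (rule H_ge1[OF B p _ c1], rule ballI)
        fix q assume "q \<in> beta (cls y)"
        then have "(\<exists>a y'. q = Inl (a, cls y')) \<or> (\<exists>w. q = Inr w \<and> out y w)" using beta_elem by blast
        then have "lift d (Inr v) q = 1" using ov by (auto simp: lift_mixed lift_Inr)
        then show "(1/2) ^ k \<le> lift d (Inr v) q" using c1 by simp
      qed
    next
      case False
      then have ov: "out y v" using v by blast
      have q: "Inr v \<in> beta (cls y)" unfolding beta_cls using ov by blast
      show ?thesis
      proof (rule H_ge2[OF B q _ c1], rule ballI)
        fix p assume "p \<in> beta (cls x)"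
        then have "(\<exists>a x'. p = Inl (a, cls x')) \<or> (\<exists>w. p = Inr w \<and> out x w)" using beta_elem by blast
        then have "lift d (Inr v) p = 1" using False by (auto simp: lift_mixed lift_Inr)
        then show "(1/2) ^ k \<le> lift d (Inr v) p" using c1 by simp
      qed
    qed
  next
    case True
    then have "\<not> (\<forall>a x'. step x a x' \<longrightarrow> (\<exists>y'. step y a y' \<and> Ek k x' y'))
      \<or> \<not> (\<forall>a y'. step y a y' \<longrightarrow> (\<exists>x'. step x a x' \<and> Ek k x' y'))" using n' by blast
    then show ?thesis
    proof
      assume "\<not> (\<forall>a x'. step x a x' \<longrightarrow> (\<exists>y'. step y a y' \<and> Ek k x' y'))"
      then obtain a x' where x': "step x a x'" "\<And>y'. step y a y' \<Longrightarrow> \<not> Ek k x' y'" by blast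
      have p: "Inl (a, cls x') \<in> beta (cls x)" unfolding beta_cls using x'(1) by blast
      show ?thesis
      proof (rule H_ge1[OF B p _ c1], rule ballI)
        fix q assume "q \<in> beta (cls y)"
        then consider (l) b y' where "q = Inl (b, cls y')" "step y b y'" | (r) w where "q = Inr w"
          using beta_elem by blast
        then show "(1/2) ^ k \<le> lift d (Inl (a, cls x')) q"
        proof cases
          case l
          show ?thesis
          proof (cases "b = a")
            case True
            then have "2 * (1/2) ^ k \<le> d (cls x') (cls y')" using H x'(2) l(2) by blast
            then show ?thesis using l(1) True by (simp add: lift_Inl_same)
          next
            case False
            then show ?thesis using l(1) c1 by (simp add: lift_Inl_diff)
          qed
        next
          case r
          then show ?thesis using c1 by (simp add: lift_mixed)
        qed
      qed
    next
      assume "\<not> (\<forall>a y'. step y a y' \<longrightarrow> (\<exists>x'. step x a x' \<and> Ek k x' y'))"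
      then obtain a y' where y': "step y a y'" "\<And>x'. step x a x' \<Longrightarrow> \<not> Ek k x' y'" by blast
      have q: "Inl (a, cls y') \<in> beta (cls y)" unfolding beta_cls using y'(1) by blast
      show ?thesis
      proof (rule H_ge2[OF B q _ c1], rule ballI)
        fix p assume "p \<in> beta (cls x)"
        then consider (l) b x' where "p = Inl (b, cls x')" "step x b x'" | (r) w where "p = Inr w"
          using beta_elem by blast
        then show "(1/2) ^ k \<le> lift d (Inl (a, cls y')) p"
        proof cases
          case l
          show ?thesis
          proof (cases "b = a")
            case True
            then have "\<not> Ek k x' y'" using y'(2) l(2) by blast
            then have "\<not> Ek k y' x'" using Ek_sym by blast
            then have "2 * (1/2) ^ k \<le> d (cls y') (cls x')" using H by blast
            then show ?thesis using l(1) True by (simp add: lift_Inl_same)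
          next
            case False
            then show ?thesis using l(1) c1 by (simp add: lift_Inl_diff)
          qed
        next
          case r
          then show ?thesis using c1 by (simp add: lift_mixed)
        qed
      qed
    qed
  qed
  then show ?thesis unfolding Phi_def .
qed



lemma DD_fix: "Phi DD (cls x) (cls y) = DD (cls x) (cls y)"
proof (cases "\<forall>k. Ek k x y")
  case True
  have "Phi DD (cls x) (cls y) \<le> 0"
    by (rule le_pow_half_0) (rule PU, use True in blast)
  moreover have "0 \<le> Phi DD (cls x) (cls y)" unfolding Phi_def by (rule H_nonneg[OF lift_bnd[OF DD_bnd]])
  moreover have "DD (cls x) (cls y) = 0" using True by (simp add: DD_cls dd_def)
  ultimately show ?thesis by simp
next
  case False
  then obtain n where n: "\<not> Ek (Suc n) x y" "Ek n x y" "dd x y = (1/2) ^ n" by (rule dd_least)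
  have "Phi DD (cls x) (cls y) \<le> (1/2) ^ n" using n(2) by (rule PU)
  moreover have "(1/2) ^ n \<le> Phi DD (cls x) (cls y)"
  proof (rule PL[OF DD_bnd _ n(1)])
    fix x' y' assume a: "\<not> Ek n x' y'"
    show "2 * (1/2) ^ n \<le> DD (cls x') (cls y')"
    proof (cases n)
      case 0
      then show ?thesis using a by simp
    next
      case (Suc m)
      then have "(1/2) ^ m \<le> dd x' y'" using a dd_ge by blast
      then show ?thesis using Suc by (simp add: DD_cls)
    qed
  qed
  ultimately show ?thesis using n(3) by (simp add: DD_cls)
qed

lemma DD_min:
  fixes x y :: "'a exp"
  assumes pm: "pseudometric_on Q d'" and fx: "\<forall>x\<in>Q. \<forall>y\<in>Q. Phi d' x y = d' x y"
  shows "DD (cls x) (cls y) \<le> d' (cls x) (cls y)"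
proof -
  have b: "\<forall>X\<in>Q. \<forall>Y\<in>Q. 0 \<le> d' X Y \<and> d' X Y \<le> 1" using pm unfolding pseudometric_on_def by blast
  have I: "\<forall>(x::'a exp) y. \<not> Ek k x y \<longrightarrow> 2 * (1/2) ^ k \<le> d' (cls x) (cls y)" for k
  proof (induct k)
    case 0
    then show ?case by simp
  next
    case (Suc k)
    show ?case
    proof (intro allI impI)
      fix x y :: "'a exp" assume n: "\<not> Ek (Suc k) x y"
      have "(1/2) ^ k \<le> Phi d' (cls x) (cls y)" by (rule PL[OF b _ n]) (use Suc.hyps in blast)
      moreover have "Phi d' (cls x) (cls y) = d' (cls x) (cls y)" using fx cls_Q by blast
      ultimately show "2 * (1/2) ^ Suc k \<le> d' (cls x) (cls y)" by simp
    qed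
  qed
  show ?thesis
  proof (cases "\<forall>k. Ek k x y")
    case True
    then have "DD (cls x) (cls y) = 0" by (simp add: DD_cls dd_def)
    moreover have "0 \<le> d' (cls x) (cls y)" using b cls_Q by blast
    ultimately show ?thesis by simp
  next
    case False
    then obtain n where n: "\<not> Ek (Suc n) x y" "Ek n x y" "dd x y = (1/2) ^ n" by (rule dd_least)
    have "2 * (1/2) ^ Suc n \<le> d' (cls x) (cls y)" using I n(1) by blast
    then show ?thesis using n(3) by (simp add: DD_cls)
  qed
qed

lemma DD_pm: "pseudometric_on Q (DD :: 'a exp set \<Rightarrow> 'a exp set \<Rightarrow> real)"
  unfolding pseudometric_on_def
proof (intro ballI)
  fix X Y :: "'a exp set" assume X: "X \<in> Q" and Y: "Y \<in> Q"
  obtain x where x: "X = cls x" using X Q_cases by blast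
  obtain y where y: "Y = cls y" using Y Q_cases by blast
  show "0 \<le> DD X Y \<and> DD X Y \<le> 1 \<and> DD X X = 0 \<and> DD X Y = DD Y X \<and> (\<forall>Z\<in>Q. DD X Z \<le> DD X Y + DD Y Z)"
  proof (intro conjI ballI)
    show "0 \<le> DD X Y" "DD X Y \<le> 1" "DD X X = 0" "DD X Y = DD Y X"
      unfolding x y DD_cls using dd_nonneg dd_le1 dd_refl dd_sym by auto
  next
    fix Z :: "'a exp set" assume "Z \<in> Q"
    then obtain z :: "'a exp" where z: "Z = cls z" using Q_cases by blast
    have "dd x z \<le> max (dd x y) (dd y z)" by (rule dd_ultra)
    also have "\<dots> \<le> dd x y + dd y z" using dd_nonneg[of x y] dd_nonneg[of y z] by simp
    finally show "DD X Z \<le> DD X Y + DD Y Z" unfolding x y z DD_cls .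
  qed
qed

definition Pbd :: "('a exp set \<Rightarrow> 'a exp set \<Rightarrow> real) \<Rightarrow> bool" where
  "Pbd d = (pseudometric_on Q d
           \<and> (\<forall>x\<in>Q. \<forall>y\<in>Q. Phi d x y = d x y)
           \<and> (\<forall>x y. x \<notin> Q \<or> y \<notin> Q \<longrightarrow> d x y = 0)
           \<and> (\<forall>d'. pseudometric_on Q d' \<and> (\<forall>x\<in>Q. \<forall>y\<in>Q. Phi d' x y = d' x y)
                   \<longrightarrow> (\<forall>x\<in>Q. \<forall>y\<in>Q. d x y \<le> d' x y)))"

lemma bd_eq: "bd = (DD :: 'a exp set \<Rightarrow> 'a exp set \<Rightarrow> real)"
proof -
  have eq: "bd = (THE d. Pbd (d :: 'a exp set \<Rightarrow> 'a exp set \<Rightarrow> real))" unfolding bd_def Pbd_def by (rule refl)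
  have f: "\<forall>X\<in>Q. \<forall>Y\<in>Q. Phi DD X Y = (DD :: 'a exp set \<Rightarrow> 'a exp set \<Rightarrow> real) X Y"
    using Q_cases DD_fix by metis
  have z: "\<forall>X Y. X \<notin> Q \<or> Y \<notin> Q \<longrightarrow> (DD :: 'a exp set \<Rightarrow> 'a exp set \<Rightarrow> real) X Y = 0"
    unfolding DD_def by auto
  have m: "\<forall>d' :: 'a exp set \<Rightarrow> 'a exp set \<Rightarrow> real. pseudometric_on Q d' \<and> (\<forall>x\<in>Q. \<forall>y\<in>Q. Phi d' x y = d' x y) \<longrightarrow>
      (\<forall>X\<in>Q. \<forall>Y\<in>Q. (DD :: 'a exp set \<Rightarrow> 'a exp set \<Rightarrow> real) X Y \<le> d' X Y)"
  proof (intro allI impI ballI)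
    fix d' :: "'a exp set \<Rightarrow> 'a exp set \<Rightarrow> real" and X Y :: "'a exp set" assume d': "pseudometric_on Q d' \<and> (\<forall>x\<in>Q. \<forall>y\<in>Q. Phi d' x y = d' x y)" and "X \<in> Q" "Y \<in> Q"
    then obtain x y where "X = cls x" "Y = cls y" using Q_cases by metis
    then show "DD X Y \<le> d' X Y" using DD_min d' by blast
  qed
  have PDD: "Pbd (DD :: 'a exp set \<Rightarrow> 'a exp set \<Rightarrow> real)"
    unfolding Pbd_def using DD_pm f z m by (intro conjI) assumption+
  have U: "d = DD" if P: "Pbd d" for d :: "'a exp set \<Rightarrow> 'a exp set \<Rightarrow> real"
  proof (rule ext, rule ext)
    fix X Y :: "'a exp set"
    have P': "pseudometric_on Q d" "\<forall>x\<in>Q. \<forall>y\<in>Q. Phi d x y = d x y" "\<forall>x y. x \<notin> Q \<or> y \<notin> Q \<longrightarrow> d x y = 0"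
      "\<forall>d'. pseudometric_on Q d' \<and> (\<forall>x\<in>Q. \<forall>y\<in>Q. Phi d' x y = d' x y) \<longrightarrow> (\<forall>x\<in>Q. \<forall>y\<in>Q. d x y \<le> d' x y)"
      using P unfolding Pbd_def by blast+
    show "d X Y = DD X Y"
    proof (cases "X \<in> Q \<and> Y \<in> Q")
      case True
      then obtain x y where xy: "X = cls x" "Y = cls y" using Q_cases by metis
      have "d X Y \<le> DD X Y" using P'(4) DD_pm f True by blast
      moreover have "DD X Y \<le> d X Y" using DD_min[of d x y] P'(1,2) xy by blast
      ultimately show ?thesis by simp
    next
      case False
      then show ?thesis using P'(3) unfolding DD_def by auto
    qed
  qed
  have "(THE d. Pbd (d :: 'a exp set \<Rightarrow> 'a exp set \<Rightarrow> real)) = DD"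
    by (rule the_equality[where P=Pbd, OF PDD U])
  then show ?thesis using eq by simp
qed



lemma simsub_in: "distinct vs \<Longrightarrow> length gs = length vs \<Longrightarrow> j < length vs \<Longrightarrow> simsub vs gs (vs ! j) = gs ! j"
  unfolding simsub_def using map_of_zip_nth[of vs gs j] by simp

lemma simsub_out: "length gs = length vs \<Longrightarrow> u \<notin> set vs \<Longrightarrow> simsub vs gs u = Var u"
proof -
  assume a: "length gs = length vs" "u \<notin> set vs"
  have "map_of (zip vs gs) u = None" using map_of_zip_is_None[of vs gs u] a by simp
  then show ?thesis unfolding simsub_def by simp
qed

theorem mainTheorem12:
  fixes vs :: "nat list" and e f :: "'a exp" and gs hs :: "'a exp list"
  assumes "distinct vs" and "length gs = length vs" and "length hs = length vs"
  shows "bd (cls (subst (simsub vs gs) e)) (cls (subst (simsub vs hs) f))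
           \<le> Max (insert (bd (cls e) (cls f))
                  {bd (cls (gs ! j)) (cls (hs ! j)) | j. j < length vs})"
proof -
  define T where "T = insert (dd e f) ((\<lambda>j. dd (gs ! j) (hs ! j)) ` {..<length vs})"
  have TT: "insert (bd (cls e) (cls f)) {bd (cls (gs ! j)) (cls (hs ! j)) | j. j < length vs} = T"
    unfolding T_def bd_eq DD_cls by auto
  have fin: "finite T" "T \<noteq> {}" unfolding T_def by auto
  define M where "M = Max T"
  have ge: "t \<in> T \<Longrightarrow> t \<le> M" for t unfolding M_def using fin by simp
  have key: "Ek k (subst (simsub vs gs) e) (subst (simsub vs hs) f)" if kM: "M \<le> (1/2) ^ k" for k
  proof (rule Ek_subst)
    have "dd e f \<le> (1/2) ^ k" using ge[of "dd e f"] kM unfolding T_def by simp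
    then show "Ek k e f" using dd_le_iff by blast
  next
    show "\<forall>u. Ek k (simsub vs gs u) (simsub vs hs u)"
    proof
      fix u
      show "Ek k (simsub vs gs u) (simsub vs hs u)"
      proof (cases "u \<in> set vs")
        case True
        then obtain j where j: "j < length vs" "u = vs ! j" by (metis in_set_conv_nth)
        have "dd (gs ! j) (hs ! j) \<le> (1/2) ^ k" using ge[of "dd (gs ! j) (hs ! j)"] kM j(1) unfolding T_def by simp
        then have "Ek k (gs ! j) (hs ! j)" using dd_le_iff by blast
        then show ?thesis using j simsub_in[OF assms(1) assms(2) j(1)] simsub_in[OF assms(1) assms(3) j(1)] by simp
      next
        case False
        then show ?thesis using simsub_out[OF assms(2) False] simsub_out[OF assms(3) False] Ek_refl by simp
      qed
    qed
  qed
  have MT: "M \<in> T" unfolding M_def using fin by simp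
  have "dd (subst (simsub vs gs) e) (subst (simsub vs hs) f) \<le> M"
  proof -
    from MT consider "M = dd e f" | j where "j < length vs" "M = dd (gs ! j) (hs ! j)" unfolding T_def by auto
    then show ?thesis
    proof cases
      case 1
      show ?thesis unfolding 1 by (rule dd_cmp) (rule key, simp add: 1)
    next
      case 2
      show ?thesis unfolding 2(2) by (rule dd_cmp) (rule key, simp add: 2)
    qed
  qed
  moreover have "bd (cls (subst (simsub vs gs) e)) (cls (subst (simsub vs hs) f)) = dd (subst (simsub vs gs) e) (subst (simsub vs hs) f)"
    by (simp add: bd_eq DD_cls)
  ultimately show ?thesis using TT M_def by simp
qed

end
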